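(* Consider the FlexGT/Acc-FlexGT recursion in the context, and suppose (S), (V), (G) hold. If $\gamma\le\frac{1}{4\beta L}$, then for all $k\ge0$, $$\mathbb{E}\|\tilde{\mathbf x}_{\beta(k+1)}\|^2\le\frac{1+\bar\rho_W}{2}\mathbb{E}\|\tilde{\mathbf x}_{\beta k}\|^2+\frac{4\gamma^2\beta^2\bar\rho_W}{1-\bar\rho_W}\mathbb{E}\|\tilde{\mathbf y}_{\beta k}\|^2+\frac{8n\gamma^2\beta^2\bar\rho_W}{1-\bar\rho_W}\sigma^2 .$$
   Context: Problem: $n$ nodes, each with $f_i(x)=\mathbb{E}_{\xi_i\sim\mathcal D_i}[f_i(x;\xi_i)]$ on $\mathbb{R}^p$, $f=\frac1n\sum_i f_i$. Stochastic oracle: unbiased $\nabla f_i(x;\xi_i)$, independent samples across nodes and iterations. Assumptions: (S) each $f_i$ has $L$-Lipschitz gradient. (V) $\mathbb{E}\|\nabla f_i(x;\xi_i)-\nabla f_i(x)\|^2\le\sigma^2$. (G) $W$ doubly stochastic, $\rho_W:=\|W-\mathbf J\|_2^2<1$, $\mathbf J=\mathbf 1\mathbf 1^\top/n$. Algorithm: integers $\alpha,\beta\ge1$, stepsize $\gamma>0$; $\bar W=W^\alpha$ (FlexGT) or $\bar W=M_\alpha$ (Acc-FlexGT) with $M_{-1}=M_0=I$, $M_{s+1}=(1+\eta)WM_s-\eta M_{s-1}$, $\eta=\frac{1-\sqrt{1-\rho_W}}{1+\sqrt{1-\rho_W}}$; $\bar\rho_W:=\|\bar W-\mathbf J\|_2^2$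 (spectral norm), assumed $<1$. Iterates $\mathbf x_t,\mathbf y_t\in\mathbb{R}^{n\times p}$; snapshot $\mathbf z_t=\mathbf x_{\beta\lfloor t/\beta\rfloor}$; $\nabla G_t$ has rows $\nabla f_i(z_{i,t};\xi_{i,t})$ with fresh samples. $\mathbf y_0=\nabla G_0$. For round $k\ge0$, $j=0,\dots,\beta-2$: $\mathbf x_{\beta k+j+1}=\mathbf x_{\beta k+j}-\gamma\mathbf y_{\beta k+j}$, $\mathbf y_{\beta k+j+1}=\mathbf y_{\beta k+j}+\nabla G_{\beta k+j+1}-\nabla G_{\beta k+j}$; round end: $\mathbf x_{\beta(k+1)}=\bar W(\mathbf x_{\beta k}-\gamma\sum_{j=0}^{\beta-1}\mathbf y_{\beta k+j})$, $\mathbf y_{\beta(k+1)}=\bar W(\mathbf y_{\beta k}+\nabla G_{\beta(k+1)}-\nabla G_{\beta k})$. Notation: $\|\cdot\|$ Euclidean/Frobenius; $\bar x_t=\mathbf 1^\top\mathbf x_t/n$, $\tilde{\mathbf x}_t=\mathbf x_t-\mathbf 1\bar x_t$, $\bar y_t=\mathbf 1^\top\mathbf y_t/n$, $\tilde{\mathbf y}_t=\mathbf y_t-\mathbf 1\bar y_t$. *)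

theory Defs
  imports "HOL-Analysis.Analysis" "HOL-Probability.Probability"
begin

text \<open>n x p matrices are represented as 'a ^ 'n (rows indexed by the finite type 'n, n = CARD('n),
  each row in the Euclidean space 'a = R^p).  The norm on 'a ^ 'n is the Frobenius norm.\<close>

definition Jmat :: "real ^ 'n ^ 'n" where
  "Jmat = (\<chi> i j. 1 / real CARD('n))"

definition doubly_stochastic :: "real ^ 'n ^ 'n \<Rightarrow> bool" where
  "doubly_stochastic W \<longleftrightarrow> (\<forall>i j. W $ i $ j \<ge> 0) \<and>
     (\<forall>i. (\<Sum>j\<in>UNIV. W $ i $ j) = 1) \<and> (\<forall>j. (\<Sum>i\<in>UNIV. W $ i $ j) = 1)"

definition spec_norm :: "real ^ 'n ^ 'n \<Rightarrow> real" where
  "spec_norm A = onorm (\<lambda>v. A *v v)"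

definition rho :: "real ^ 'n ^ 'n \<Rightarrow> real" where
  "rho A = (spec_norm (A - Jmat))\<^sup>2"

primrec mat_pow :: "real ^ 'n ^ 'n \<Rightarrow> nat \<Rightarrow> real ^ 'n ^ 'n" where
  "mat_pow W 0 = mat 1"
| "mat_pow W (Suc k) = W ** mat_pow W k"

text \<open>Chebyshev-accelerated gossip: M_{-1} = M_0 = I, M_{s+1} = (1+eta) W M_s - eta M_{s-1}\<close>
fun acc_mat :: "real ^ 'n ^ 'n \<Rightarrow> real \<Rightarrow> nat \<Rightarrow> real ^ 'n ^ 'n" where
  "acc_mat W \<eta> 0 = mat 1"
| "acc_mat W \<eta> (Suc 0) = (1 + \<eta>) *\<^sub>R (W ** mat 1) - \<eta> *\<^sub>R mat 1"
| "acc_mat W \<eta> (Suc (Suc s)) = (1 + \<eta>) *\<^sub>R (W ** acc_mat W \<eta> (Suc s)) - \<eta> *\<^sub>R acc_mat W \<eta> s"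

definition acc_eta :: "real ^ 'n ^ 'n \<Rightarrow> real" where
  "acc_eta W = (1 - sqrt (1 - rho W)) / (1 + sqrt (1 - rho W))"

definition mix :: "real ^ 'n ^ 'n \<Rightarrow> 'a::real_vector ^ 'n \<Rightarrow> 'a ^ 'n" where
  "mix A X = (\<chi> i. \<Sum>j\<in>UNIV. A $ i $ j *\<^sub>R X $ j)"

definition avg :: "'a::real_vector ^ 'n \<Rightarrow> 'a" where
  "avg X = (1 / real CARD('n)) *\<^sub>R (\<Sum>i\<in>UNIV. X $ i)"

definition tilde :: "'a::real_vector ^ 'n \<Rightarrow> 'a ^ 'n" where
  "tilde X = X - (\<chi> i. avg X)"

definition stoch_grad ::
  "('n \<Rightarrow> 'a \<Rightarrow> 's \<Rightarrow> 'a) \<Rightarrow> (nat \<Rightarrow> 'n \<Rightarrow> 'w \<Rightarrow> 's) \<Rightarrow> nat \<Rightarrow> 'a ^ 'n \<Rightarrow> 'w \<Rightarrow> 'a ^ 'n" where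
  "stoch_grad g \<xi> t Z \<omega> = (\<chi> i. g i (Z $ i) (\<xi> t i \<omega>))"

text \<open>FlexGT iterates (x_t, y_t, z_t) for a fixed outcome omega, with z_t = x_{beta floor(t/beta)}.\<close>
fun flexgt ::
  "real ^ 'n ^ 'n \<Rightarrow> real \<Rightarrow> nat \<Rightarrow> ('n \<Rightarrow> 'a::real_vector \<Rightarrow> 's \<Rightarrow> 'a) \<Rightarrow>
   (nat \<Rightarrow> 'n \<Rightarrow> 'w \<Rightarrow> 's) \<Rightarrow> 'a ^ 'n \<Rightarrow> 'w \<Rightarrow> nat \<Rightarrow> (('a ^ 'n) \<times> ('a ^ 'n) \<times> ('a ^ 'n))" where
  "flexgt Wb \<gamma> \<beta> g \<xi> x0 \<omega> 0 = (x0, stoch_grad g \<xi> 0 x0 \<omega>, x0)"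
| "flexgt Wb \<gamma> \<beta> g \<xi> x0 \<omega> (Suc t) =
     (case flexgt Wb \<gamma> \<beta> g \<xi> x0 \<omega> t of (x, y, z) \<Rightarrow>
       (if Suc t mod \<beta> = 0 then
          (let x' = mix Wb (x - \<gamma> *\<^sub>R y)
           in (x', mix Wb (y + stoch_grad g \<xi> (Suc t) x' \<omega> - stoch_grad g \<xi> t z \<omega>), x'))
        else
          (x - \<gamma> *\<^sub>R y, y + stoch_grad g \<xi> (Suc t) z \<omega> - stoch_grad g \<xi> t z \<omega>, z)))"

definition xs :: "real ^ 'n ^ 'n \<Rightarrow> real \<Rightarrow> nat \<Rightarrow> ('n \<Rightarrow> 'a::real_vector \<Rightarrow> 's \<Rightarrow> 'a) \<Rightarrow>
   (nat \<Rightarrow> 'n \<Rightarrow> 'w \<Rightarrow> 's) \<Rightarrow> 'a ^ 'n \<Rightarrow> nat \<Rightarrow> 'w \<Rightarrow> 'a ^ 'n" where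
  "xs Wb \<gamma> \<beta> g \<xi> x0 t \<omega> = fst (flexgt Wb \<gamma> \<beta> g \<xi> x0 \<omega> t)"

definition ys :: "real ^ 'n ^ 'n \<Rightarrow> real \<Rightarrow> nat \<Rightarrow> ('n \<Rightarrow> 'a::real_vector \<Rightarrow> 's \<Rightarrow> 'a) \<Rightarrow>
   (nat \<Rightarrow> 'n \<Rightarrow> 'w \<Rightarrow> 's) \<Rightarrow> 'a ^ 'n \<Rightarrow> nat \<Rightarrow> 'w \<Rightarrow> 'a ^ 'n" where
  "ys Wb \<gamma> \<beta> g \<xi> x0 t \<omega> = fst (snd (flexgt Wb \<gamma> \<beta> g \<xi> x0 \<omega> t))"

end

theory Submission
  imports Defs
begin

lemma vec_lambda_as_sum: "(\<chi> j. f j) = (\<Sum>i\<in>UNIV. axis i (f i :: 'a::real_vector))"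
  by (simp add: vec_eq_iff sum_component axis_def)

lemma borel_measurable_vec_lambda:
  fixes f :: "'n::finite \<Rightarrow> 'w \<Rightarrow> 'a::euclidean_space"
  assumes "\<And>i. f i \<in> borel_measurable N"
  shows "(\<lambda>\<omega>. \<chi> i. f i \<omega>) \<in> borel_measurable N"
proof -
  have c: "continuous_on UNIV (axis i :: 'a \<Rightarrow> 'a^'n)" for i
    unfolding axis_def
    by (intro continuous_on_vec_lambda, case_tac "ia = i") (auto intro: continuous_intros)
  have "(\<lambda>\<omega>. \<Sum>i\<in>UNIV. axis i (f i \<omega>)) \<in> borel_measurable N"
    by (intro borel_measurable_sum borel_measurable_continuous_on[OF c] assms)
  then show ?thesis by (simp add: vec_lambda_as_sum)
qed

lemma borel_measurable_vec_nth[measurable]: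
  fixes f :: "'w \<Rightarrow> 'a::euclidean_space^'n"
  assumes "f \<in> borel_measurable N"
  shows "(\<lambda>\<omega>. f \<omega> $ i) \<in> borel_measurable N"
  by (intro borel_measurable_continuous_on[OF _ assms] continuous_intros)


definition rows1 :: "real^'n^'n \<Rightarrow> bool" where
  "rows1 A \<longleftrightarrow> (\<forall>i. (\<Sum>j\<in>UNIV. A $ i $ j) = 1)"
definition cols1 :: "real^'n^'n \<Rightarrow> bool" where
  "cols1 A \<longleftrightarrow> (\<forall>j. (\<Sum>i\<in>UNIV. A $ i $ j) = 1)"

lemma rows1_mult: "rows1 A \<Longrightarrow> rows1 B \<Longrightarrow> rows1 ((A::real^'n::finite^'n) ** B)"
  unfolding rows1_def matrix_matrix_mult_def
  by (simp add: sum.swap[of _ UNIV UNIV] flip: sum_distrib_left)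

lemma cols1_mult: "cols1 A \<Longrightarrow> cols1 B \<Longrightarrow> cols1 ((A::real^'n::finite^'n) ** B)"
  unfolding cols1_def matrix_matrix_mult_def
  by (simp add: sum.swap[of _ UNIV UNIV] flip: sum_distrib_right)

lemma rows1_id: "rows1 (mat 1 :: real^'n::finite^'n)"
  unfolding rows1_def mat_def by (simp add: if_distrib sum.delta cong: if_cong)
lemma cols1_id: "cols1 (mat 1 :: real^'n::finite^'n)"
  unfolding cols1_def mat_def by (simp add: if_distrib sum.delta' cong: if_cong)

lemma rows1_comb: "rows1 A \<Longrightarrow> rows1 B \<Longrightarrow> rows1 ((1 + e) *\<^sub>R A - e *\<^sub>R (B::real^'n::finite^'n))"
  unfolding rows1_def by (simp add: sum_subtractf flip: sum_distrib_left)
lemma cols1_comb: "cols1 A \<Longrightarrow> cols1 B \<Longrightarrow> cols1 ((1 + e) *\<^sub>R A - e *\<^sub>R (B::real^'n::finite^'n))"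
  unfolding cols1_def by (simp add: sum_subtractf flip: sum_distrib_left)

lemma acc_rows_cols: "rows1 W \<Longrightarrow> cols1 W \<Longrightarrow> rows1 (acc_mat W e s) \<and> cols1 (acc_mat W e s)"
  by (induction W e s rule: acc_mat.induct)
     (auto intro!: rows1_comb cols1_comb rows1_mult cols1_mult rows1_id cols1_id)

lemma pow_rows_cols: "rows1 W \<Longrightarrow> cols1 W \<Longrightarrow> rows1 (mat_pow W s) \<and> cols1 (mat_pow W s)"
  by (induction s) (auto intro!: rows1_mult cols1_mult rows1_id cols1_id)

lemma ds_rows_cols: "doubly_stochastic W \<Longrightarrow> rows1 W \<and> cols1 W"
  unfolding doubly_stochastic_def rows1_def cols1_def by auto

lemma mix_add: "mix A (X + Y) = mix A X + mix A Y"
  by (simp add: mix_def vec_eq_iff scaleR_add_right sum.distrib)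
lemma mix_diff: "mix A (X - Y) = mix A X - mix A Y"
  by (simp add: mix_def vec_eq_iff scaleR_diff_right sum_subtractf)
lemma mix_scale: "mix A (c *\<^sub>R X) = c *\<^sub>R mix A X"
  by (simp add: mix_def vec_eq_iff scaleR_sum_right mult.commute)
lemma mix_zero: "mix A 0 = 0"
  by (simp add: mix_def vec_eq_iff)
lemma mix_sum: "mix A (\<Sum>l\<in>S. X l) = (\<Sum>l\<in>S. mix A (X l))"
  by (induction S rule: infinite_finite_induct) (auto simp: mix_add mix_zero)
lemma mix_matdiff: "mix (A - B) X = mix A X - mix B X"
  by (simp add: mix_def vec_eq_iff scaleR_diff_left sum_subtractf)
lemma mix_mult: "mix A (mix B X) = mix (A ** (B::real^'n::finite^'n)) X"
proof -
  have "mix A (mix B X) $ i = mix (A ** B) X $ i" for i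
  proof -
    have "mix A (mix B X) $ i = (\<Sum>k\<in>UNIV. \<Sum>j\<in>UNIV. (A$i$k * B$k$j) *\<^sub>R X$j)"
      by (simp add: mix_def scaleR_sum_right)
    also have "\<dots> = (\<Sum>j\<in>UNIV. \<Sum>k\<in>UNIV. (A$i$k * B$k$j) *\<^sub>R X$j)"
      by (rule sum.swap)
    also have "\<dots> = mix (A ** B) X $ i"
      by (simp add: mix_def matrix_matrix_mult_def scaleR_sum_left)
    finally show ?thesis .
  qed
  then show ?thesis by (simp add: vec_eq_iff)
qed
lemma mix_J: "mix Jmat X = (\<chi> i. avg X)"
  by (simp add: mix_def Jmat_def avg_def vec_eq_iff scaleR_sum_right)
lemma tilde_eq: "tilde X = X - mix Jmat X"
  by (simp add: tilde_def mix_J)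
lemma J_mult: "cols1 A \<Longrightarrow> Jmat ** A = (Jmat :: real^'n::finite^'n)"
  by (simp add: cols1_def Jmat_def matrix_matrix_mult_def vec_eq_iff flip: sum_divide_distrib)
lemma mult_J: "rows1 A \<Longrightarrow> A ** Jmat = (Jmat :: real^'n::finite^'n)"
  by (simp add: rows1_def Jmat_def matrix_matrix_mult_def vec_eq_iff flip: sum_divide_distrib)
lemma J_J: "Jmat ** Jmat = (Jmat :: real^'n::finite^'n)"
  by (simp add: Jmat_def matrix_matrix_mult_def vec_eq_iff)

lemma tilde_mix: "rows1 A \<Longrightarrow> cols1 A \<Longrightarrow> tilde (mix A V) = mix (A - Jmat) (tilde (V::'a::real_vector^'n::finite))"
proof -
  assume r: "rows1 A" and c: "cols1 A"
  have z: "mix (A - Jmat) (mix Jmat V) = 0"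
    unfolding mix_matdiff by (simp add: mix_mult mult_J[OF r] J_J)
  show ?thesis
    by (simp add: tilde_eq mix_diff z) (simp add: mix_mult J_mult[OF c] mix_matdiff)
qed

lemma tilde_diff: "tilde (X - Y) = tilde X - tilde (Y::'a::real_vector^'n::finite)"
  by (simp add: tilde_eq mix_diff)
lemma tilde_add: "tilde (X + Y) = tilde X + tilde (Y::'a::real_vector^'n::finite)"
  by (simp add: tilde_eq mix_add)
lemma tilde_scale: "tilde (c *\<^sub>R X) = c *\<^sub>R tilde (X::'a::real_vector^'n::finite)"
  by (simp add: tilde_eq mix_scale scaleR_diff_right)

lemma norm_vec_sq: "(norm (X::'a::real_normed_vector^'n::finite))\<^sup>2 = (\<Sum>i\<in>UNIV. (norm (X$i))\<^sup>2)"
  unfolding norm_vec_def L2_set_def by (rule real_sqrt_pow2) (simp add: sum_nonneg)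
lemma norm_eucl_sq: "(norm (v::'a::euclidean_space))\<^sup>2 = (\<Sum>b\<in>Basis. (v \<bullet> b)\<^sup>2)"
  unfolding power2_norm_eq_inner by (subst euclidean_inner) (simp add: power2_eq_square)
lemma norm_real_vec_sq: "(norm (x::real^'n::finite))\<^sup>2 = (\<Sum>i\<in>UNIV. (x$i)\<^sup>2)"
  by (simp add: norm_vec_sq)

lemma norm_mix_sq:
  fixes X :: "'a::euclidean_space^'n::finite"
  shows "(norm (mix A X))\<^sup>2 \<le> (spec_norm A)\<^sup>2 * (norm X)\<^sup>2"
proof -
  define col where "col b = (\<chi> j. X$j \<bullet> b)" for b
  have comp: "mix A X $ i \<bullet> b = (A *v col b) $ i" for i b
    by (simp add: mix_def col_def matrix_vector_mult_def inner_sum_left)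
  have s0: "spec_norm A \<ge> 0" unfolding spec_norm_def by (rule onorm_pos_le) simp
  have bd: "(norm (A *v v))\<^sup>2 \<le> (spec_norm A)\<^sup>2 * (norm v)\<^sup>2" for v
  proof -
    have "norm (A *v v) \<le> spec_norm A * norm v"
      unfolding spec_norm_def by (rule onorm) simp
    then have "(norm (A *v v))\<^sup>2 \<le> (spec_norm A * norm v)\<^sup>2"
      by (intro power_mono) auto
    then show ?thesis by (simp add: power_mult_distrib)
  qed
  have "(norm (mix A X))\<^sup>2 = (\<Sum>i\<in>UNIV. \<Sum>b\<in>Basis. ((A *v col b) $ i)\<^sup>2)"
    by (simp add: norm_vec_sq norm_eucl_sq comp)
  also have "\<dots> = (\<Sum>b\<in>Basis. (norm (A *v col b))\<^sup>2)"
    by (simp add: norm_real_vec_sq) (rule sum.swap)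
  also have "\<dots> \<le> (\<Sum>b\<in>Basis. (spec_norm A)\<^sup>2 * (norm (col b))\<^sup>2)"
    by (intro sum_mono bd)
  also have "\<dots> = (spec_norm A)\<^sup>2 * (norm X)\<^sup>2"
    by (simp add: norm_real_vec_sq norm_vec_sq norm_eucl_sq col_def flip: sum_distrib_left)
       (rule disjI2, rule sum.swap)
  finally show ?thesis .
qed

lemma norm_tilde_sq: "(norm (tilde (X::'a::real_inner^'n::finite)))\<^sup>2 \<le> (norm X)\<^sup>2"
proof -
  define m where "m = avg X"
  have sm: "(\<Sum>i\<in>UNIV. X$i) = real CARD('n) *\<^sub>R m"
    by (simp add: m_def avg_def)
  have "(norm (tilde X))\<^sup>2 = (\<Sum>i\<in>UNIV. (norm (X$i - m))\<^sup>2)"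
    by (simp add: norm_vec_sq tilde_def m_def)
  also have "\<dots> = (\<Sum>i\<in>UNIV. (norm (X$i))\<^sup>2) - 2 * ((\<Sum>i\<in>UNIV. X$i) \<bullet> m) + real CARD('n) * (norm m)\<^sup>2"
    by (simp add: power2_norm_eq_inner inner_diff_left inner_diff_right sum_subtractf
        sum.distrib inner_sum_left inner_sum_right inner_commute algebra_simps sum_distrib_left)
  also have "\<dots> = (\<Sum>i\<in>UNIV. (norm (X$i))\<^sup>2) - real CARD('n) * (norm m)\<^sup>2"
    by (simp add: sm power2_norm_eq_inner)
  also have "\<dots> \<le> (norm X)\<^sup>2" by (simp add: norm_vec_sq)
  finally show ?thesis .
qed


lemma scalar_ineq:
  fixes r u v :: real
  assumes r0: "0 \<le> r" and r1: "r < 1"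
  shows "r * (u + v)\<^sup>2 \<le> (1 + r) / 2 * u\<^sup>2 + 2 * r / (1 - r) * v\<^sup>2"
proof -
  have key: "0 \<le> ((1-r)* u - 2*r* v)\<^sup>2 + 2*r*(1-r)* v\<^sup>2"
    using r0 r1 by (intro add_nonneg_nonneg) auto
  have "2 * (1 - r) * (r * (u + v)\<^sup>2) \<le> 2 * (1 - r) * ((1 + r) / 2 * u\<^sup>2 + 2 * r / (1 - r) * v\<^sup>2)"
  proof -
    have "2 * (1 - r) * ((1 + r) / 2 * u\<^sup>2 + 2 * r / (1 - r) * v\<^sup>2) = (1 - r) * (1 + r) * u\<^sup>2 + 4 * r * v\<^sup>2"
      using r1 by (simp add: field_simps)
    moreover have "2 * (1 - r) * (r * (u + v)\<^sup>2) + (((1-r)* u - 2*r* v)\<^sup>2 + 2*r*(1-r)* v\<^sup>2) = (1 - r) * (1 + r) * u\<^sup>2 + 4 * r * v\<^sup>2"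
      by (simp add: power2_eq_square algebra_simps)
    ultimately show ?thesis using key by linarith
  qed
  then show ?thesis using r1 by (simp add: mult_le_cancel_left_pos)
qed


lemma flexgt_round:
  assumes beta: "\<beta> \<ge> 1" and S0: "flexgt Wb \<gamma> \<beta> g \<xi> x0 \<omega> (\<beta> * k) = (X, Y, X)"
    and j: "j < \<beta>"
  shows "flexgt Wb \<gamma> \<beta> g \<xi> x0 \<omega> (\<beta> * k + j) =
    (X - \<gamma> *\<^sub>R (\<Sum>l<j. Y + stoch_grad g \<xi> (\<beta> * k + l) X \<omega> - stoch_grad g \<xi> (\<beta> * k) X \<omega>),
     Y + stoch_grad g \<xi> (\<beta> * k + j) X \<omega> - stoch_grad g \<xi> (\<beta> * k) X \<omega>, X)"
  using j
proof (induction j)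
  case 0 then show ?case using S0 by simp
next
  case (Suc j)
  have m: "Suc (\<beta> * k + j) mod \<beta> \<noteq> 0"
  proof -
    have "Suc (\<beta> * k + j) = Suc j + \<beta> * k" by simp
    then have "Suc (\<beta> * k + j) mod \<beta> = Suc j mod \<beta>" by (simp only: mod_mult_self2)
    also have "\<dots> = Suc j" using Suc.prems by simp
    finally show ?thesis by simp
  qed
  define G where "G l = stoch_grad g \<xi> (\<beta> * k + l) X \<omega>" for l
  have IH: "flexgt Wb \<gamma> \<beta> g \<xi> x0 \<omega> (\<beta> * k + j) = (X - \<gamma> *\<^sub>R (\<Sum>l<j. Y + G l - G 0), Y + G j - G 0, X)"
    using Suc.IH[OF Suc_lessD[OF Suc.prems]] by (simp add: G_def)
  have e: "\<beta> * k + Suc j = Suc (\<beta> * k + j)" by simp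
  have "flexgt Wb \<gamma> \<beta> g \<xi> x0 \<omega> (\<beta> * k + Suc j) =
     (X - \<gamma> *\<^sub>R (\<Sum>l<j. Y + G l - G 0) - \<gamma> *\<^sub>R (Y + G j - G 0),
      Y + G j - G 0 + G (Suc j) - G j, X)"
    unfolding e flexgt.simps(2) IH using m by (simp add: G_def)
  also have "\<dots> = (X - \<gamma> *\<^sub>R (\<Sum>l<Suc j. Y + G l - G 0), Y + G (Suc j) - G 0, X)"
    by (simp add: scaleR_add_right diff_diff_add)
  finally show ?case by (simp add: G_def)
qed

lemma flexgt_z_eq_x:
  assumes "t mod \<beta> = 0"
  shows "snd (snd (flexgt Wb \<gamma> \<beta> g \<xi> x0 \<omega> t)) = fst (flexgt Wb \<gamma> \<beta> g \<xi> x0 \<omega> t)"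
proof (cases t)
  case 0 then show ?thesis by simp
next
  case (Suc m)
  obtain x y z where e: "flexgt Wb \<gamma> \<beta> g \<xi> x0 \<omega> m = (x, y, z)" by (cases "flexgt Wb \<gamma> \<beta> g \<xi> x0 \<omega> m") auto
  show ?thesis using assms by (simp add: Suc e Let_def)
qed

lemma flexgt_round_end:
  assumes beta: "\<beta> \<ge> 1" and S0: "flexgt Wb \<gamma> \<beta> g \<xi> x0 \<omega> (\<beta> * k) = (X, Y, X)"
  shows "fst (flexgt Wb \<gamma> \<beta> g \<xi> x0 \<omega> (\<beta> * (k + 1))) =
    mix Wb (X - \<gamma> *\<^sub>R (real \<beta> *\<^sub>R Y + (\<Sum>l<\<beta>. stoch_grad g \<xi> (\<beta> * k + l) X \<omega> - stoch_grad g \<xi> (\<beta> * k) X \<omega>)))"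
proof -
  define G where "G l = stoch_grad g \<xi> (\<beta> * k + l) X \<omega>" for l
  obtain b where b: "\<beta> = Suc b" using beta by (cases \<beta>) auto
  have e: "\<beta> * (k + 1) = Suc (\<beta> * k + b)" by (simp add: b)
  have bl: "b < \<beta>" by (simp add: b)
  have r: "flexgt Wb \<gamma> \<beta> g \<xi> x0 \<omega> (\<beta> * k + b) = (X - \<gamma> *\<^sub>R (\<Sum>l<b. Y + G l - G 0), Y + G b - G 0, X)"
    using flexgt_round[OF beta S0 bl] by (simp add: G_def)
  have m: "Suc (\<beta> * k + b) mod \<beta> = 0"
    unfolding e[symmetric] by simp
  have "fst (flexgt Wb \<gamma> \<beta> g \<xi> x0 \<omega> (\<beta> * (k + 1))) = 
     mix Wb (X - \<gamma> *\<^sub>R (\<Sum>l<b. Y + G l - G 0) - \<gamma> *\<^sub>R (Y + G b - G 0))"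
    unfolding e flexgt.simps(2) r using m by (simp add: Let_def)
  also have "\<dots> = mix Wb (X - \<gamma> *\<^sub>R (\<Sum>l<\<beta>. Y + G l - G 0))"
    by (simp add: b scaleR_add_right diff_diff_add)
  also have "(\<Sum>l<\<beta>. Y + G l - G 0) = real \<beta> *\<^sub>R Y + (\<Sum>l<\<beta>. G l - G 0)"
  proof -
    have "(\<Sum>l<\<beta>. Y + G l - G 0) = (\<Sum>l<\<beta>. Y + (G l - G 0))"
      by (intro sum.cong) (auto simp: algebra_simps)
    also have "\<dots> = real \<beta> *\<^sub>R Y + (\<Sum>l<\<beta>. G l - G 0)"
      by (simp only: sum.distrib sum_constant_scaleR card_lessThan)
    finally show ?thesis .
  qed
  finally show ?thesis by (simp add: G_def)
qed


lemma pointwise_bound: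
  fixes X Y Dv :: "'a::euclidean_space^'n::finite"
  assumes r: "rows1 Wb" and c: "cols1 Wb" and r1: "rho Wb < 1"
  shows "(norm (tilde (mix Wb (X - \<gamma> *\<^sub>R (real \<beta> *\<^sub>R Y + Dv)))))\<^sup>2
    \<le> (1 + rho Wb) / 2 * (norm (tilde X))\<^sup>2
      + 4 * \<gamma>\<^sup>2 * (real \<beta>)\<^sup>2 * rho Wb / (1 - rho Wb) * (norm (tilde Y))\<^sup>2
      + 4 * \<gamma>\<^sup>2 * rho Wb / (1 - rho Wb) * (norm Dv)\<^sup>2"
proof -
  define \<rho> where "\<rho> = rho Wb"
  have r0: "0 \<le> \<rho>" by (simp add: \<rho>_def rho_def)
  have r1': "\<rho> < 1" using r1 by (simp add: \<rho>_def)
  define V where "V = X - \<gamma> *\<^sub>R (real \<beta> *\<^sub>R Y + Dv)"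
  define u where "u = norm (tilde X)"
  define v where "v = \<bar>\<gamma>\<bar> * norm (real \<beta> *\<^sub>R tilde Y + tilde Dv)"
  have tV: "tilde V = tilde X - \<gamma> *\<^sub>R (real \<beta> *\<^sub>R tilde Y + tilde Dv)"
    by (simp add: V_def tilde_diff tilde_scale tilde_add)
  have nV: "norm (tilde V) \<le> u + v"
    unfolding tV u_def v_def by (rule order_trans[OF norm_triangle_ineq4]) simp
  have "(norm (tilde (mix Wb V)))\<^sup>2 \<le> \<rho> * (norm (tilde V))\<^sup>2"
    unfolding tilde_mix[OF r c] \<rho>_def rho_def by (rule norm_mix_sq)
  also have "\<dots> \<le> \<rho> * (u + v)\<^sup>2"
    using nV r0 by (intro mult_left_mono power_mono) auto
  also have "\<dots> \<le> (1 + \<rho>) / 2 * u\<^sup>2 + 2 * \<rho> / (1 - \<rho>) * v\<^sup>2"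
    by (rule scalar_ineq[OF r0 r1'])
  also have "v\<^sup>2 \<le> 2 * \<gamma>\<^sup>2 * ((real \<beta>)\<^sup>2 * (norm (tilde Y))\<^sup>2 + (norm Dv)\<^sup>2)"
  proof -
    have a: "norm (real \<beta> *\<^sub>R tilde Y + tilde Dv) \<le> real \<beta> * norm (tilde Y) + norm (tilde Dv)"
      by (rule order_trans[OF norm_triangle_ineq]) simp
    have "(norm (real \<beta> *\<^sub>R tilde Y + tilde Dv))\<^sup>2 \<le> (real \<beta> * norm (tilde Y) + norm (tilde Dv))\<^sup>2"
      using a by (intro power_mono) auto
    also have "\<dots> \<le> 2 * ((real \<beta> * norm (tilde Y))\<^sup>2 + (norm (tilde Dv))\<^sup>2)"
      using zero_le_power2[of "real \<beta> * norm (tilde Y) - norm (tilde Dv)"]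
      by (simp add: power2_eq_square algebra_simps)
    also have "\<dots> \<le> 2 * ((real \<beta>)\<^sup>2 * (norm (tilde Y))\<^sup>2 + (norm Dv)\<^sup>2)"
      using norm_tilde_sq[of Dv] by (simp add: power_mult_distrib)
    finally have "(norm (real \<beta> *\<^sub>R tilde Y + tilde Dv))\<^sup>2 \<le> 2 * ((real \<beta>)\<^sup>2 * (norm (tilde Y))\<^sup>2 + (norm Dv)\<^sup>2)" .
    then have "\<gamma>\<^sup>2 * (norm (real \<beta> *\<^sub>R tilde Y + tilde Dv))\<^sup>2 \<le> \<gamma>\<^sup>2 * (2 * ((real \<beta>)\<^sup>2 * (norm (tilde Y))\<^sup>2 + (norm Dv)\<^sup>2))"
      by (intro mult_left_mono) auto
    then show ?thesis by (simp add: v_def power_mult_distrib algebra_simps)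
  qed
  then have "2 * \<rho> / (1 - \<rho>) * v\<^sup>2 \<le> 2 * \<rho> / (1 - \<rho>) * (2 * \<gamma>\<^sup>2 * ((real \<beta>)\<^sup>2 * (norm (tilde Y))\<^sup>2 + (norm Dv)\<^sup>2))"
    using r0 r1' by (intro mult_left_mono) auto
  then have "(1 + \<rho>) / 2 * u\<^sup>2 + 2 * \<rho> / (1 - \<rho>) * v\<^sup>2 \<le> (1 + \<rho>) / 2 * u\<^sup>2 + 2 * \<rho> / (1 - \<rho>) * (2 * \<gamma>\<^sup>2 * ((real \<beta>)\<^sup>2 * (norm (tilde Y))\<^sup>2 + (norm Dv)\<^sup>2))"
    by linarith
  also have "\<dots> = (1 + \<rho>) / 2 * u\<^sup>2 + 4 * \<gamma>\<^sup>2 * (real \<beta>)\<^sup>2 * \<rho> / (1 - \<rho>) * (norm (tilde Y))\<^sup>2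
      + 4 * \<gamma>\<^sup>2 * \<rho> / (1 - \<rho>) * (norm Dv)\<^sup>2"
  proof -
    have nz: "1 - \<rho> \<noteq> 0" using r1' by simp
    show ?thesis by (simp add: nz divide_simps) (simp add: algebra_simps)
  qed
  finally show ?thesis by (simp add: V_def u_def \<rho>_def)
qed


lemma inner_bound:
  fixes g :: "'s \<Rightarrow> 'a::euclidean_space"
  assumes D: "prob_space D" and gi: "integrable D g" and gm: "(\<integral>s. g s \<partial>D) = m"
    and vi: "integrable D (\<lambda>s. (norm (g s - m))\<^sup>2)" and v: "(\<integral>s. (norm (g s - m))\<^sup>2 \<partial>D) \<le> \<sigma>2"
  shows "(\<integral>\<^sup>+s. ennreal ((norm (g s - m + c))\<^sup>2) \<partial>D) \<le> ennreal (\<sigma>2 + (norm c)\<^sup>2)"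
proof -
  interpret D: prob_space D by fact
  define e where "e s = g s - m" for s
  have ei: "integrable D e" unfolding e_def using gi by auto
  have e0: "(\<integral>s. e s \<partial>D) = 0" unfolding e_def using gi gm
    by (simp add: Bochner_Integration.integral_diff D.prob_space)
  have eq: "(norm (e s + c))\<^sup>2 = (norm (e s))\<^sup>2 + 2 * (e s \<bullet> c) + (norm c)\<^sup>2" for s
    by (simp add: power2_norm_eq_inner inner_add_left inner_add_right inner_commute)
  have fi: "integrable D (\<lambda>s. (norm (e s))\<^sup>2 + 2 * (e s \<bullet> c) + (norm c)\<^sup>2)"
    using vi ei unfolding e_def by (intro Bochner_Integration.integrable_add integrable_mult_right integrable_inner_left) auto
  have "(\<integral>\<^sup>+s. ennreal ((norm (g s - m + c))\<^sup>2) \<partial>D)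
      = (\<integral>\<^sup>+s. ennreal ((norm (e s))\<^sup>2 + 2 * (e s \<bullet> c) + (norm c)\<^sup>2) \<partial>D)"
    using eq unfolding e_def by presburger
  also have "\<dots> = ennreal (\<integral>s. (norm (e s))\<^sup>2 + 2 * (e s \<bullet> c) + (norm c)\<^sup>2 \<partial>D)"
    using fi by (intro nn_integral_eq_integral) (auto simp flip: eq)
  also have "(\<integral>s. (norm (e s))\<^sup>2 + 2 * (e s \<bullet> c) + (norm c)\<^sup>2 \<partial>D)
      = (\<integral>s. (norm (e s))\<^sup>2 \<partial>D) + 2 * ((\<integral>s. e s \<partial>D) \<bullet> c) + (norm c)\<^sup>2"
    using vi ei unfolding e_def
    by (simp add: Bochner_Integration.integral_add integrable_mult_right integrable_inner_left D.prob_space)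
  also have "\<dots> \<le> \<sigma>2 + (norm c)\<^sup>2" using v e0 by (simp add: e_def)
  finally show ?thesis by (simp add: ennreal_leI)
qed

lemma KL:
  fixes U W :: "'w \<Rightarrow> 'u" and ev :: "'u \<Rightarrow> 's" and \<Phi> \<Psi> :: "'u \<Rightarrow> 'a::euclidean_space"
    and g :: "'a \<Rightarrow> 's \<Rightarrow> 'a" and gr :: "'a \<Rightarrow> 'a"
  assumes M: "prob_space M" and D: "prob_space D"
    and ind: "prob_space.indep_var M S U T W"
    and evm: "ev \<in> measurable T D"
    and distrV: "distr M D (\<lambda>\<omega>. ev (W \<omega>)) = D"
    and \<Phi>m: "\<Phi> \<in> borel_measurable S" and \<Psi>m: "\<Psi> \<in> borel_measurable S"
    and gm: "(\<lambda>(x, s). g x s) \<in> borel_measurable (borel \<Otimes>\<^sub>M D)"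
    and grm: "gr \<in> borel_measurable borel"
    and unb: "\<And>x. integrable D (g x) \<and> (\<integral>s. g x s \<partial>D) = gr x"
    and vi: "\<And>x. integrable D (\<lambda>s. (norm (g x s - gr x))\<^sup>2)"
    and v: "\<And>x. (\<integral>s. (norm (g x s - gr x))\<^sup>2 \<partial>D) \<le> \<sigma>2"
  shows "(\<integral>\<^sup>+\<omega>. ennreal ((norm (g (\<Phi> (U \<omega>)) (ev (W \<omega>)) - gr (\<Phi> (U \<omega>)) + \<Psi> (U \<omega>)))\<^sup>2) \<partial>M)
    \<le> ennreal \<sigma>2 + (\<integral>\<^sup>+\<omega>. ennreal ((norm (\<Psi> (U \<omega>)))\<^sup>2) \<partial>M)"
proof -
  interpret M: prob_space M by fact
  interpret D: prob_space D by fact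
  have rvU: "U \<in> measurable M S" and rvW: "W \<in> measurable M T"
    and prod: "distr M S U \<Otimes>\<^sub>M distr M T W = distr M (S \<Otimes>\<^sub>M T) (\<lambda>x. (U x, W x))"
    using ind unfolding M.indep_var_distribution_eq by auto
  interpret SU: prob_space "distr M S U" by (rule M.prob_space_distr[OF rvU])
  interpret TW: prob_space "distr M T W" by (rule M.prob_space_distr[OF rvW])
  have s0: "0 \<le> \<sigma>2" using v[of undefined] by (smt (verit) integral_nonneg_AE AE_I2 zero_le_power2)
  define h where "h p = ennreal ((norm (g (\<Phi> (fst p)) (snd p) - gr (\<Phi> (fst p)) + \<Psi> (fst p)))\<^sup>2)" for p
  have gcomp: "(\<lambda>p. g (\<Phi> (fst p)) (snd p)) \<in> borel_measurable (S \<Otimes>\<^sub>M D)"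
  proof -
    have "(\<lambda>p. (\<Phi> (fst p), snd p)) \<in> measurable (S \<Otimes>\<^sub>M D) (borel \<Otimes>\<^sub>M D)"
      using \<Phi>m by measurable
    from measurable_comp[OF this gm] show ?thesis by (simp add: comp_def)
  qed
  have hm: "h \<in> borel_measurable (S \<Otimes>\<^sub>M D)"
    unfolding h_def using gcomp \<Phi>m \<Psi>m grm by measurable
  have evp: "(\<lambda>p. (fst p, ev (snd p))) \<in> measurable (S \<Otimes>\<^sub>M T) (S \<Otimes>\<^sub>M D)"
    using evm by measurable
  have hm': "(\<lambda>p. h (fst p, ev (snd p))) \<in> borel_measurable (S \<Otimes>\<^sub>M T)"
    using measurable_comp[OF evp hm] by (simp add: comp_def)
  have "(\<integral>\<^sup>+\<omega>. ennreal ((norm (g (\<Phi> (U \<omega>)) (ev (W \<omega>)) - gr (\<Phi> (U \<omega>)) + \<Psi> (U \<omega>)))\<^sup>2) \<partial>M)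
      = (\<integral>\<^sup>+\<omega>. (\<lambda>p. h (fst p, ev (snd p))) (U \<omega>, W \<omega>) \<partial>M)" by (simp add: h_def)
  also have "\<dots> = integral\<^sup>N (distr M (S \<Otimes>\<^sub>M T) (\<lambda>x. (U x, W x))) (\<lambda>p. h (fst p, ev (snd p)))"
    using rvU rvW hm' by (subst nn_integral_distr) (auto intro: measurable_Pair)
  also have "\<dots> = integral\<^sup>N (distr M S U \<Otimes>\<^sub>M distr M T W) (\<lambda>p. h (fst p, ev (snd p)))"
    by (simp add: prod[symmetric])
  also have "\<dots> = (\<integral>\<^sup>+u. \<integral>\<^sup>+w. h (u, ev w) \<partial>distr M T W \<partial>distr M S U)"
    using hm' by (subst TW.nn_integral_fst[symmetric]) (auto cong: measurable_cong_sets)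
  also have "\<dots> \<le> (\<integral>\<^sup>+u. ennreal \<sigma>2 + ennreal ((norm (\<Psi> u))\<^sup>2) \<partial>distr M S U)"
  proof (intro nn_integral_mono)
    fix u assume "u \<in> space (distr M S U)"
    then have uS: "u \<in> space S" by simp
    have hu: "(\<lambda>s. h (u, s)) \<in> borel_measurable D"
      using hm uS by measurable
    have "(\<integral>\<^sup>+w. h (u, ev w) \<partial>distr M T W) = (\<integral>\<^sup>+\<omega>. h (u, ev (W \<omega>)) \<partial>M)"
      using rvW hu evm by (subst nn_integral_distr) auto
    also have "\<dots> = (\<integral>\<^sup>+s. h (u, s) \<partial>distr M D (\<lambda>\<omega>. ev (W \<omega>)))"
      using rvW hu evm by (subst nn_integral_distr) auto
    also have "\<dots> = (\<integral>\<^sup>+s. h (u, s) \<partial>D)" by (simp add: distrV)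
    also have "\<dots> \<le> ennreal (\<sigma>2 + (norm (\<Psi> u))\<^sup>2)"
      unfolding h_def fst_conv snd_conv
      by (rule inner_bound[OF D conjunct1[OF unb] conjunct2[OF unb] vi v])
    also have "\<dots> \<le> ennreal \<sigma>2 + ennreal ((norm (\<Psi> u))\<^sup>2)"
      using s0 by (simp add: ennreal_plus)
    finally show "(\<integral>\<^sup>+w. h (u, ev w) \<partial>distr M T W) \<le> ennreal \<sigma>2 + ennreal ((norm (\<Psi> u))\<^sup>2)" .
  qed
  also have "\<dots> = ennreal \<sigma>2 + (\<integral>\<^sup>+u. ennreal ((norm (\<Psi> u))\<^sup>2) \<partial>distr M S U)"
  proof -
    have e1: "emeasure (distr M S U) (space S) = 1" using SU.emeasure_space_1 by simp
    show ?thesis using \<Psi>m by (subst nn_integral_add) (auto simp: e1)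
  qed
  also have "(\<integral>\<^sup>+u. ennreal ((norm (\<Psi> u))\<^sup>2) \<partial>distr M S U) = (\<integral>\<^sup>+\<omega>. ennreal ((norm (\<Psi> (U \<omega>)))\<^sup>2) \<partial>M)"
    using rvU \<Psi>m by (subst nn_integral_distr) auto
  finally show ?thesis .
qed


lemma flexgt_Suc_comps:
  fixes \<xi> :: "nat \<Rightarrow> 'n::finite \<Rightarrow> 'w \<Rightarrow> 's" and Wb \<gamma> \<beta> g x0 \<omega> m
  defines "X \<equiv> fst (flexgt Wb \<gamma> \<beta> g \<xi> x0 \<omega> m)"
    and "Y \<equiv> fst (snd (flexgt Wb \<gamma> \<beta> g \<xi> x0 \<omega> m))"
    and "Z \<equiv> snd (snd (flexgt Wb \<gamma> \<beta> g \<xi> x0 \<omega> m))"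
  shows "fst (flexgt Wb \<gamma> \<beta> g \<xi> x0 \<omega> (Suc m)) =
      (if Suc m mod \<beta> = 0 then mix Wb (X - \<gamma> *\<^sub>R Y) else X - \<gamma> *\<^sub>R Y)"
    and "fst (snd (flexgt Wb \<gamma> \<beta> g \<xi> x0 \<omega> (Suc m))) =
      (if Suc m mod \<beta> = 0 then mix Wb (Y + stoch_grad g \<xi> (Suc m) (mix Wb (X - \<gamma> *\<^sub>R Y)) \<omega> - stoch_grad g \<xi> m Z \<omega>)
       else Y + stoch_grad g \<xi> (Suc m) Z \<omega> - stoch_grad g \<xi> m Z \<omega>)"
    and "snd (snd (flexgt Wb \<gamma> \<beta> g \<xi> x0 \<omega> (Suc m))) =
      (if Suc m mod \<beta> = 0 then mix Wb (X - \<gamma> *\<^sub>R Y) else Z)"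
  unfolding X_def Y_def Z_def
  by (cases "flexgt Wb \<gamma> \<beta> g \<xi> x0 \<omega> m"; simp add: Let_def)+

lemma flexgt_local:
  assumes "\<And>s i. s \<le> m \<Longrightarrow> \<xi> s i \<omega> = \<xi>' s i \<omega>'"
  shows "flexgt Wb \<gamma> \<beta> g \<xi> x0 \<omega> m = flexgt Wb \<gamma> \<beta> g \<xi>' x0 \<omega>' m"
  using assms
proof (induction m)
  case 0 then show ?case by (simp add: stoch_grad_def)
next
  case (Suc m)
  have IH: "flexgt Wb \<gamma> \<beta> g \<xi> x0 \<omega> m = flexgt Wb \<gamma> \<beta> g \<xi>' x0 \<omega>' m"
    using Suc by auto
  have G: "stoch_grad g \<xi> s Z \<omega> = stoch_grad g \<xi>' s Z \<omega>'" if "s \<le> Suc m" for s Z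
    using Suc.prems that by (simp add: stoch_grad_def)
  show ?case by (simp add: IH G split: prod.split)
qed

lemma flexgt_local_xz:
  assumes "\<And>s i. s < m \<Longrightarrow> \<xi> s i \<omega> = \<xi>' s i \<omega>'"
  shows "fst (flexgt Wb \<gamma> \<beta> g \<xi> x0 \<omega> m) = fst (flexgt Wb \<gamma> \<beta> g \<xi>' x0 \<omega>' m)"
    and "snd (snd (flexgt Wb \<gamma> \<beta> g \<xi> x0 \<omega> m)) = snd (snd (flexgt Wb \<gamma> \<beta> g \<xi>' x0 \<omega>' m))"
proof -
  have "fst (flexgt Wb \<gamma> \<beta> g \<xi> x0 \<omega> m) = fst (flexgt Wb \<gamma> \<beta> g \<xi>' x0 \<omega>' m) \<and>
        snd (snd (flexgt Wb \<gamma> \<beta> g \<xi> x0 \<omega> m)) = snd (snd (flexgt Wb \<gamma> \<beta> g \<xi>' x0 \<omega>' m))"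
  proof (cases m)
    case 0 then show ?thesis by simp
  next
    case (Suc m')
    have IH: "flexgt Wb \<gamma> \<beta> g \<xi> x0 \<omega> m' = flexgt Wb \<gamma> \<beta> g \<xi>' x0 \<omega>' m'"
      using assms Suc by (intro flexgt_local) auto
    show ?thesis unfolding Suc flexgt_Suc_comps IH by simp
  qed
  then show "fst (flexgt Wb \<gamma> \<beta> g \<xi> x0 \<omega> m) = fst (flexgt Wb \<gamma> \<beta> g \<xi>' x0 \<omega>' m)"
    and "snd (snd (flexgt Wb \<gamma> \<beta> g \<xi> x0 \<omega> m)) = snd (snd (flexgt Wb \<gamma> \<beta> g \<xi>' x0 \<omega>' m))" by auto
qed

lemma mix_meas[measurable]:
  fixes X :: "'w \<Rightarrow> 'a::euclidean_space^'n::finite"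
  assumes "X \<in> borel_measurable N"
  shows "(\<lambda>\<omega>. mix A (X \<omega>)) \<in> borel_measurable N"
  unfolding mix_def using assms
  by (intro borel_measurable_vec_lambda borel_measurable_sum borel_measurable_scaleR borel_measurable_vec_nth)
     auto

lemma stoch_grad_meas:
  fixes Z :: "'w \<Rightarrow> 'a::euclidean_space^'n::finite"
  assumes Z: "Z \<in> borel_measurable N" and xi: "\<And>i. \<xi> t i \<in> measurable N (D i)"
    and gm: "\<And>i. (\<lambda>(x, s). g i x s) \<in> borel_measurable (borel \<Otimes>\<^sub>M D i)"
  shows "(\<lambda>\<omega>. stoch_grad g \<xi> t (Z \<omega>) \<omega>) \<in> borel_measurable N"
  unfolding stoch_grad_def
proof (intro borel_measurable_vec_lambda)
  fix i
  have "(\<lambda>\<omega>. (Z \<omega> $ i, \<xi> t i \<omega>)) \<in> measurable N (borel \<Otimes>\<^sub>M D i)"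
    using Z xi by (intro measurable_Pair borel_measurable_vec_nth) auto
  from measurable_comp[OF this gm] show "(\<lambda>\<omega>. g i (Z \<omega> $ i) (\<xi> t i \<omega>)) \<in> borel_measurable N"
    by (simp add: comp_def)
qed

lemma flexgt_meas:
  fixes x0 :: "'a::euclidean_space^'n::finite"
  assumes xi: "\<And>s i. s \<le> m \<Longrightarrow> \<xi> s i \<in> measurable N (D i)"
    and gm: "\<And>i. (\<lambda>(x, s). g i x s) \<in> borel_measurable (borel \<Otimes>\<^sub>M D i)"
  shows "(\<lambda>\<omega>. fst (flexgt Wb \<gamma> \<beta> g \<xi> x0 \<omega> m)) \<in> borel_measurable N \<and>
         (\<lambda>\<omega>. fst (snd (flexgt Wb \<gamma> \<beta> g \<xi> x0 \<omega> m))) \<in> borel_measurable N \<and>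
         (\<lambda>\<omega>. snd (snd (flexgt Wb \<gamma> \<beta> g \<xi> x0 \<omega> m))) \<in> borel_measurable N"
  using xi
proof (induction m)
  case 0
  have "(\<lambda>\<omega>. stoch_grad g \<xi> 0 x0 \<omega>) \<in> borel_measurable N"
    using 0 by (intro stoch_grad_meas[OF _ _ gm]) auto
  then show ?case by simp
next
  case (Suc m)
  have IH: "(\<lambda>\<omega>. fst (flexgt Wb \<gamma> \<beta> g \<xi> x0 \<omega> m)) \<in> borel_measurable N"
       "(\<lambda>\<omega>. fst (snd (flexgt Wb \<gamma> \<beta> g \<xi> x0 \<omega> m))) \<in> borel_measurable N"
       "(\<lambda>\<omega>. snd (snd (flexgt Wb \<gamma> \<beta> g \<xi> x0 \<omega> m))) \<in> borel_measurable N"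
    using Suc by auto
  have sg: "(\<lambda>\<omega>. stoch_grad g \<xi> t (Z \<omega>) \<omega>) \<in> borel_measurable N"
    if "t \<le> Suc m" "Z \<in> borel_measurable N" for t and Z :: "_ \<Rightarrow> 'a^'n"
    using Suc.prems that by (intro stoch_grad_meas[OF _ _ gm]) auto
  show ?case
  proof (cases "Suc m mod \<beta> = 0")
    case True
    show ?thesis unfolding flexgt_Suc_comps if_P[OF True] using IH
      by (intro conjI sg borel_measurable_add borel_measurable_diff mix_meas borel_measurable_scaleR) auto
  next
    case False
    show ?thesis unfolding flexgt_Suc_comps if_not_P[OF False] using IH
      by (intro conjI sg borel_measurable_add borel_measurable_diff mix_meas borel_measurable_scaleR) auto
  qed
qed

lemma flexgt_meas_xz:
  fixes x0 :: "'a::euclidean_space^'n::finite"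
  assumes xi: "\<And>s i. s < m \<Longrightarrow> \<xi> s i \<in> measurable N (D i)"
    and gm: "\<And>i. (\<lambda>(x, s). g i x s) \<in> borel_measurable (borel \<Otimes>\<^sub>M D i)"
  shows "(\<lambda>\<omega>. fst (flexgt Wb \<gamma> \<beta> g \<xi> x0 \<omega> m)) \<in> borel_measurable N \<and>
         (\<lambda>\<omega>. snd (snd (flexgt Wb \<gamma> \<beta> g \<xi> x0 \<omega> m))) \<in> borel_measurable N"
proof (cases m)
  case 0 then show ?thesis by simp
next
  case (Suc m')
  have IH: "(\<lambda>\<omega>. fst (flexgt Wb \<gamma> \<beta> g \<xi> x0 \<omega> m')) \<in> borel_measurable N"
       "(\<lambda>\<omega>. fst (snd (flexgt Wb \<gamma> \<beta> g \<xi> x0 \<omega> m'))) \<in> borel_measurable N"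
       "(\<lambda>\<omega>. snd (snd (flexgt Wb \<gamma> \<beta> g \<xi> x0 \<omega> m'))) \<in> borel_measurable N"
    using flexgt_meas[of m' \<xi> N D g] xi gm Suc by auto
  show ?thesis
  proof (cases "Suc m' mod \<beta> = 0")
    case True
    show ?thesis unfolding Suc flexgt_Suc_comps if_P[OF True] using IH
      by (intro conjI borel_measurable_diff mix_meas borel_measurable_scaleR) auto
  next
    case False
    show ?thesis unfolding Suc flexgt_Suc_comps if_not_P[OF False] using IH
      by (intro conjI borel_measurable_diff mix_meas borel_measurable_scaleR) auto
  qed
qed


locale fsetup =
  fixes M :: "'w measure" and D :: "'n::finite \<Rightarrow> 's measure" and \<xi> :: "nat \<Rightarrow> 'n \<Rightarrow> 'w \<Rightarrow> 's"
    and g :: "'n \<Rightarrow> 'a::euclidean_space \<Rightarrow> 's \<Rightarrow> 'a" and grad :: "'n \<Rightarrow> 'a \<Rightarrow> 'a"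
    and Wb :: "real^'n^'n" and x0 :: "'a^'n" and L \<sigma> \<gamma> :: real and \<beta> :: nat
  assumes M: "prob_space M" and D: "\<And>i. prob_space (D i)"
    and xi_meas: "\<And>t i. \<xi> t i \<in> measurable M (D i)"
    and xi_distr: "\<And>t i. distr M (D i) (\<xi> t i) = D i"
    and xi_indep: "prob_space.indep_vars M (\<lambda>(t, i). D i) (\<lambda>(t, i). \<xi> t i) UNIV"
    and g_meas: "\<And>i. (\<lambda>(x, s). g i x s) \<in> borel_measurable (borel \<Otimes>\<^sub>M D i)"
    and unbiased: "\<And>i x. integrable (D i) (g i x) \<and> (\<integral>s. g i x s \<partial>D i) = grad i x"
    and smooth: "\<And>i x y. norm (grad i x - grad i y) \<le> L * norm (x - y)"
    and var_int: "\<And>i x. integrable (D i) (\<lambda>s. (norm (g i x s - grad i x))\<^sup>2)"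
    and var: "\<And>i x. (\<integral>s. (norm (g i x s - grad i x))\<^sup>2 \<partial>D i) \<le> \<sigma>\<^sup>2"
    and L0: "L > 0"
begin

sublocale P: prob_space M by (rule M)

definition "Dp = (\<lambda>(t::nat, i::'n). D i)"
definition "K t = ({..<t} \<times> (UNIV :: 'n set))"
definition "Ut t \<omega> = restrict (\<lambda>j. (\<lambda>(t, i). \<xi> t i) j \<omega>) (K t)"
definition "Wt t i \<omega> = restrict (\<lambda>j. (\<lambda>(t, i). \<xi> t i) j \<omega>) {(t, i)}"
definition "\<xi>P s i (\<zeta> :: nat \<times> 'n \<Rightarrow> 's) = \<zeta> (s, i)"
definition "St t = PiM (K t) Dp"
definition "xx m \<omega> = fst (flexgt Wb \<gamma> \<beta> g \<xi> x0 \<omega> m)"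
definition "yy m \<omega> = fst (snd (flexgt Wb \<gamma> \<beta> g \<xi> x0 \<omega> m))"
definition "zz m \<omega> = snd (snd (flexgt Wb \<gamma> \<beta> g \<xi> x0 \<omega> m))"
definition "xP m \<zeta> = fst (flexgt Wb \<gamma> \<beta> g \<xi>P x0 \<zeta> m)"
definition "zP m \<zeta> = snd (snd (flexgt Wb \<gamma> \<beta> g \<xi>P x0 \<zeta> m))"

lemma indep_t: "P.indep_var (St t) (Ut t) (PiM {(t, i)} Dp) (Wt t i)"
  unfolding St_def Ut_def Wt_def Dp_def
  by (rule P.indep_var_restrict[OF xi_indep]) (auto simp: K_def)

lemma ev_meas: "(\<lambda>\<zeta>. \<zeta> (t, i)) \<in> measurable (PiM {(t, i)} Dp) (D i)"
  using measurable_component_singleton[of "(t, i)" "{(t, i)}" Dp] by (simp add: Dp_def)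

lemma ev_W: "Wt t i \<omega> (t, i) = \<xi> t i \<omega>"
  by (simp add: Wt_def)

lemma xiP_meas: "s < t \<Longrightarrow> \<xi>P s i \<in> measurable (St t) (D i)"
  unfolding \<xi>P_def St_def
  using measurable_component_singleton[of "(s, i)" "K t" Dp] by (simp add: Dp_def K_def)

lemma xiP_U: "s < t \<Longrightarrow> \<xi>P s i (Ut t \<omega>) = \<xi> s i \<omega>"
  by (simp add: \<xi>P_def Ut_def K_def)

lemma rep: "m \<le> t \<Longrightarrow> xx m \<omega> = xP m (Ut t \<omega>) \<and> zz m \<omega> = zP m (Ut t \<omega>)"
  unfolding xx_def zz_def xP_def zP_def
  using flexgt_local_xz[of m \<xi> \<omega> \<xi>P "Ut t \<omega>"] xiP_U by auto

lemma xP_meas: "m \<le> t \<Longrightarrow> xP m \<in> borel_measurable (St t) \<and> zP m \<in> borel_measurable (St t)"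
  unfolding xP_def zP_def
  using flexgt_meas_xz[of m \<xi>P "St t" D g Wb \<gamma> \<beta> x0] xiP_meas g_meas by auto

lemma grad_meas: "grad i \<in> borel_measurable borel"
proof -
  have "L-lipschitz_on UNIV (grad i)"
    using smooth L0 by (intro lipschitz_onI) (auto simp: dist_norm)
  then have "continuous_on UNIV (grad i)" by (rule lipschitz_on_continuous_on)
  then show ?thesis by (rule borel_measurable_continuous_onI)
qed

lemma flex_meas_M:
  "xx m \<in> borel_measurable M" "yy m \<in> borel_measurable M" "zz m \<in> borel_measurable M"
  unfolding xx_def yy_def zz_def using flexgt_meas[of m \<xi> M D g Wb \<gamma> \<beta> x0] xi_meas g_meas by auto

lemma KLi:
  assumes \<Phi>m: "\<Phi> \<in> borel_measurable (St t)" and \<Psi>m: "\<Psi> \<in> borel_measurable (St t)"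
  shows "(\<integral>\<^sup>+\<omega>. ennreal ((norm (g i (\<Phi> (Ut t \<omega>)) (\<xi> t i \<omega>) - grad i (\<Phi> (Ut t \<omega>)) + \<Psi> (Ut t \<omega>)))\<^sup>2) \<partial>M)
    \<le> ennreal (\<sigma>\<^sup>2) + (\<integral>\<^sup>+\<omega>. ennreal ((norm (\<Psi> (Ut t \<omega>)))\<^sup>2) \<partial>M)"
proof -
  have dv: "distr M (D i) (\<lambda>\<omega>. Wt t i \<omega> (t, i)) = D i"
    by (simp add: ev_W xi_distr)
  show ?thesis
    using KL[OF M D[of i] indep_t[of t i] ev_meas dv \<Phi>m \<Psi>m g_meas[of i] grad_meas[of i] unbiased var_int var]
    by (simp add: ev_W)
qed

end

definition sqi :: "'w measure \<Rightarrow> ('w \<Rightarrow> 'b::real_normed_vector) \<Rightarrow> bool" where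
  "sqi N f \<longleftrightarrow> f \<in> borel_measurable N \<and> (\<integral>\<^sup>+\<omega>. ennreal ((norm (f \<omega>))\<^sup>2) \<partial>N) < \<infinity>"

lemma sqi_bound2:
  fixes f1 :: "'w \<Rightarrow> 'b::real_normed_vector" and f2 :: "'w \<Rightarrow> 'c::real_normed_vector"
    and h :: "'w \<Rightarrow> 'd::real_normed_vector"
  assumes N: "finite_measure N" and s1: "sqi N f1" and s2: "sqi N f2"
    and hm: "h \<in> borel_measurable N" and a: "0 \<le> a" and b: "0 \<le> b"
    and bd: "\<And>\<omega>. \<omega> \<in> space N \<Longrightarrow> (norm (h \<omega>))\<^sup>2 \<le> a * (norm (f1 \<omega>))\<^sup>2 + a * (norm (f2 \<omega>))\<^sup>2 + b"
  shows "sqi N h"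
proof -
  interpret N: finite_measure N by fact
  have m1: "f1 \<in> borel_measurable N" and m2: "f2 \<in> borel_measurable N"
    and i1: "(\<integral>\<^sup>+\<omega>. ennreal ((norm (f1 \<omega>))\<^sup>2) \<partial>N) < \<infinity>"
    and i2: "(\<integral>\<^sup>+\<omega>. ennreal ((norm (f2 \<omega>))\<^sup>2) \<partial>N) < \<infinity>"
    using s1 s2 by (auto simp: sqi_def)
  have "(\<integral>\<^sup>+\<omega>. ennreal ((norm (h \<omega>))\<^sup>2) \<partial>N)
      \<le> (\<integral>\<^sup>+\<omega>. ennreal a * ennreal ((norm (f1 \<omega>))\<^sup>2) + ennreal a * ennreal ((norm (f2 \<omega>))\<^sup>2) + ennreal b \<partial>N)"
  proof (intro nn_integral_mono)
    fix \<omega> assume "\<omega> \<in> space N"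
    then have "ennreal ((norm (h \<omega>))\<^sup>2) \<le> ennreal (a * (norm (f1 \<omega>))\<^sup>2 + a * (norm (f2 \<omega>))\<^sup>2 + b)"
      using bd by (intro ennreal_leI) auto
    also have "\<dots> = ennreal a * ennreal ((norm (f1 \<omega>))\<^sup>2) + ennreal a * ennreal ((norm (f2 \<omega>))\<^sup>2) + ennreal b"
      using a b by (simp add: ennreal_plus ennreal_mult)
    finally show "ennreal ((norm (h \<omega>))\<^sup>2) \<le> ennreal a * ennreal ((norm (f1 \<omega>))\<^sup>2) + ennreal a * ennreal ((norm (f2 \<omega>))\<^sup>2) + ennreal b" .
  qed
  also have "\<dots> = ennreal a * (\<integral>\<^sup>+\<omega>. ennreal ((norm (f1 \<omega>))\<^sup>2) \<partial>N) + ennreal a * (\<integral>\<^sup>+\<omega>. ennreal ((norm (f2 \<omega>))\<^sup>2) \<partial>N) + ennreal b * emeasure N (space N)"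
    using m1 m2 by (simp add: nn_integral_add nn_integral_cmult)
  also have "\<dots> < \<infinity>"
    using i1 i2 N.emeasure_finite[of "space N"]
    by (simp add: ennreal_mult_eq_top_iff less_top[symmetric])
  finally show ?thesis using hm by (simp add: sqi_def)
qed

lemma sqi_const: "finite_measure N \<Longrightarrow> sqi N (\<lambda>\<omega>. c)"
  using sqi_bound2[of N "\<lambda>_. 0::real" "\<lambda>_. 0::real" "\<lambda>\<omega>. c" 0 "(norm c)\<^sup>2"]
  by (simp add: sqi_def)

lemma sqi_add:
  fixes f1 f2 :: "'w \<Rightarrow> 'b::{real_normed_vector, second_countable_topology}"
  assumes N: "finite_measure N" and s1: "sqi N f1" and s2: "sqi N f2"
  shows "sqi N (\<lambda>\<omega>. f1 \<omega> + f2 \<omega>)" "sqi N (\<lambda>\<omega>. f1 \<omega> - f2 \<omega>)"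
proof -
  have m1: "f1 \<in> borel_measurable N" and m2: "f2 \<in> borel_measurable N"
    using s1 s2 by (auto simp: sqi_def)
  have sq: "(norm (u + v))\<^sup>2 \<le> 2 * (norm u)\<^sup>2 + 2 * (norm v)\<^sup>2" "(norm (u - v))\<^sup>2 \<le> 2 * (norm u)\<^sup>2 + 2 * (norm v)\<^sup>2" for u v :: 'b
  proof -
    have k: "(x + y)\<^sup>2 \<le> 2 * x\<^sup>2 + 2 * y\<^sup>2" for x y :: real
      using zero_le_power2[of "x - y"] by (simp add: power2_eq_square algebra_simps)
    have "(norm (u + v))\<^sup>2 \<le> (norm u + norm v)\<^sup>2" by (intro power_mono norm_triangle_ineq) auto
    then show "(norm (u + v))\<^sup>2 \<le> 2 * (norm u)\<^sup>2 + 2 * (norm v)\<^sup>2" using k[of "norm u" "norm v"] by linarith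
    have "(norm (u - v))\<^sup>2 \<le> (norm u + norm v)\<^sup>2" by (intro power_mono norm_triangle_ineq4) auto
    then show "(norm (u - v))\<^sup>2 \<le> 2 * (norm u)\<^sup>2 + 2 * (norm v)\<^sup>2" using k[of "norm u" "norm v"] by linarith
  qed
  show "sqi N (\<lambda>\<omega>. f1 \<omega> + f2 \<omega>)"
    by (rule sqi_bound2[OF N s1 s2, of _ 2 0]) (use m1 m2 sq in auto)
  show "sqi N (\<lambda>\<omega>. f1 \<omega> - f2 \<omega>)"
    by (rule sqi_bound2[OF N s1 s2, of _ 2 0]) (use m1 m2 sq in auto)
qed

lemma sqi_scale:
  fixes f :: "'w \<Rightarrow> 'b::{real_normed_vector, second_countable_topology}"
  assumes N: "finite_measure N" and s: "sqi N f"
  shows "sqi N (\<lambda>\<omega>. c *\<^sub>R f \<omega>)"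
proof -
  have m: "f \<in> borel_measurable N" using s by (auto simp: sqi_def)
  show ?thesis
    by (rule sqi_bound2[OF N s s, of _ "c\<^sup>2" 0]) (use m in \<open>auto simp: power_mult_distrib\<close>)
qed

lemma sqi_mix:
  fixes f :: "'w \<Rightarrow> 'a::euclidean_space^'n::finite"
  assumes N: "finite_measure N" and s: "sqi N f"
  shows "sqi N (\<lambda>\<omega>. mix A (f \<omega>))"
proof (rule sqi_bound2[OF N s s, of _ "(spec_norm A)\<^sup>2" 0])
  show "(\<lambda>\<omega>. mix A (f \<omega>)) \<in> borel_measurable N"
    using s by (intro mix_meas) (simp add: sqi_def)
  fix \<omega>
  have a: "(norm (mix A (f \<omega>)))\<^sup>2 \<le> (spec_norm A)\<^sup>2 * (norm (f \<omega>))\<^sup>2" by (rule norm_mix_sq)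
  have b: "0 \<le> (spec_norm A)\<^sup>2 * (norm (f \<omega>))\<^sup>2" by simp
  show "(norm (mix A (f \<omega>)))\<^sup>2 \<le> (spec_norm A)\<^sup>2 * (norm (f \<omega>))\<^sup>2 + (spec_norm A)\<^sup>2 * (norm (f \<omega>))\<^sup>2 + 0"
    using a b by linarith
qed auto

lemma sqi_vec:
  fixes f :: "'w \<Rightarrow> 'a::euclidean_space^'n::finite"
  assumes m: "f \<in> borel_measurable N" and s: "\<And>i. (\<integral>\<^sup>+\<omega>. ennreal ((norm (f \<omega> $ i))\<^sup>2) \<partial>N) < \<infinity>"
  shows "sqi N f"
proof -
  have "(\<integral>\<^sup>+\<omega>. ennreal ((norm (f \<omega>))\<^sup>2) \<partial>N) = (\<integral>\<^sup>+\<omega>. (\<Sum>i\<in>UNIV. ennreal ((norm (f \<omega> $ i))\<^sup>2)) \<partial>N)"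
    by (simp add: norm_vec_sq sum_ennreal)
  also have "\<dots> = (\<Sum>i\<in>UNIV. (\<integral>\<^sup>+\<omega>. ennreal ((norm (f \<omega> $ i))\<^sup>2) \<partial>N))"
    using m by (intro nn_integral_sum) auto
  also have "\<dots> < \<infinity>" using s by (simp add: ennreal_sum_less_top less_top[symmetric])
  finally show ?thesis using m by (simp add: sqi_def)
qed


context fsetup begin

lemma fm: "finite_measure M" by (rule P.finite_measure_axioms)

lemma grad_bound: "(norm (grad i x))\<^sup>2 \<le> 2 * (norm (grad i 0))\<^sup>2 + 2 * L\<^sup>2 * (norm x)\<^sup>2"
proof -
  have "norm (grad i x) \<le> norm (grad i 0) + L * norm x"
    using smooth[of i x 0] norm_triangle_ineq[of "grad i x - grad i 0" "grad i 0"] by simp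
  then have "(norm (grad i x))\<^sup>2 \<le> (norm (grad i 0) + L * norm x)\<^sup>2"
    by (intro power_mono) auto
  also have "\<dots> \<le> 2 * (norm (grad i 0))\<^sup>2 + 2 * L\<^sup>2 * (norm x)\<^sup>2"
    using zero_le_power2[of "norm (grad i 0) - L * norm x"] by (simp add: power2_eq_square algebra_simps)
  finally show ?thesis .
qed

lemma Gfin:
  assumes sz: "sqi M (zz m)"
  shows "sqi M (\<lambda>\<omega>. stoch_grad g \<xi> m (zz m \<omega>) \<omega>)"
proof (rule sqi_vec)
  show "(\<lambda>\<omega>. stoch_grad g \<xi> m (zz m \<omega>) \<omega>) \<in> borel_measurable M"
    by (rule stoch_grad_meas[OF flex_meas_M(3) xi_meas g_meas])
  fix i
  define \<Phi> where "\<Phi> \<zeta> = zP m \<zeta> $ i" for \<zeta>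
  define \<Psi> where "\<Psi> \<zeta> = grad i (\<Phi> \<zeta>)" for \<zeta>
  have \<Phi>m: "\<Phi> \<in> borel_measurable (St m)"
    unfolding \<Phi>_def using xP_meas[of m m] by (intro borel_measurable_vec_nth) auto
  have \<Psi>m: "\<Psi> \<in> borel_measurable (St m)"
    unfolding \<Psi>_def using measurable_comp[OF \<Phi>m grad_meas[of i]] by (simp add: comp_def)
  have eqz: "\<Phi> (Ut m \<omega>) = zz m \<omega> $ i" for \<omega>
    using rep[of m m \<omega>] by (simp add: \<Phi>_def)
  have "(\<integral>\<^sup>+\<omega>. ennreal ((norm (stoch_grad g \<xi> m (zz m \<omega>) \<omega> $ i))\<^sup>2) \<partial>M)
      = (\<integral>\<^sup>+\<omega>. ennreal ((norm (g i (\<Phi> (Ut m \<omega>)) (\<xi> m i \<omega>) - grad i (\<Phi> (Ut m \<omega>)) + \<Psi> (Ut m \<omega>)))\<^sup>2) \<partial>M)"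
    by (simp add: stoch_grad_def eqz \<Psi>_def)
  also have "\<dots> \<le> ennreal (\<sigma>\<^sup>2) + (\<integral>\<^sup>+\<omega>. ennreal ((norm (\<Psi> (Ut m \<omega>)))\<^sup>2) \<partial>M)"
    by (rule KLi[OF \<Phi>m \<Psi>m])
  also have "\<dots> < \<infinity>"
  proof -
    have "sqi M (\<lambda>\<omega>. grad i (zz m \<omega> $ i))"
    proof (rule sqi_bound2[OF fm sz sz, of _ "L\<^sup>2" "2 * (norm (grad i 0))\<^sup>2"])
      show "(\<lambda>\<omega>. grad i (zz m \<omega> $ i)) \<in> borel_measurable M"
        using measurable_comp[OF borel_measurable_vec_nth[OF flex_meas_M(3)] grad_meas[of i]]
        by (simp add: comp_def)
      fix \<omega>
      have "(norm (zz m \<omega> $ i))\<^sup>2 \<le> (norm (zz m \<omega>))\<^sup>2"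
        unfolding norm_vec_sq[of "zz m \<omega>"] by (rule member_le_sum) auto
      then show "(norm (grad i (zz m \<omega> $ i)))\<^sup>2 \<le> L\<^sup>2 * (norm (zz m \<omega>))\<^sup>2 + L\<^sup>2 * (norm (zz m \<omega>))\<^sup>2 + 2 * (norm (grad i 0))\<^sup>2"
        using grad_bound[where i = i and x = "zz m \<omega> $ i"] mult_left_mono[of "(norm (zz m \<omega> $ i))\<^sup>2" "(norm (zz m \<omega>))\<^sup>2" "L\<^sup>2"]
        by auto
    qed auto
    then show ?thesis by (simp add: sqi_def \<Psi>_def eqz)
  qed
  finally show "(\<integral>\<^sup>+\<omega>. ennreal ((norm (stoch_grad g \<xi> m (zz m \<omega>) \<omega> $ i))\<^sup>2) \<partial>M) < \<infinity>" .
qed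

lemma comps_Suc:
  "xx (Suc m) \<omega> = (if Suc m mod \<beta> = 0 then mix Wb (xx m \<omega> - \<gamma> *\<^sub>R yy m \<omega>) else xx m \<omega> - \<gamma> *\<^sub>R yy m \<omega>)"
  "zz (Suc m) \<omega> = (if Suc m mod \<beta> = 0 then mix Wb (xx m \<omega> - \<gamma> *\<^sub>R yy m \<omega>) else zz m \<omega>)"
  "yy (Suc m) \<omega> = (if Suc m mod \<beta> = 0
      then mix Wb (yy m \<omega> + stoch_grad g \<xi> (Suc m) (zz (Suc m) \<omega>) \<omega> - stoch_grad g \<xi> m (zz m \<omega>) \<omega>)
      else yy m \<omega> + stoch_grad g \<xi> (Suc m) (zz (Suc m) \<omega>) \<omega> - stoch_grad g \<xi> m (zz m \<omega>) \<omega>)"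
  unfolding xx_def yy_def zz_def flexgt_Suc_comps by auto

lemma sq_all: "sqi M (xx m) \<and> sqi M (yy m) \<and> sqi M (zz m)"
proof (induction m)
  case 0
  have z: "sqi M (zz 0)" unfolding zz_def by (simp add: sqi_const[OF fm])
  have "sqi M (\<lambda>\<omega>. stoch_grad g \<xi> 0 (zz 0 \<omega>) \<omega>)" by (rule Gfin[OF z])
  moreover have "yy 0 = (\<lambda>\<omega>. stoch_grad g \<xi> 0 (zz 0 \<omega>) \<omega>)" by (simp add: yy_def zz_def fun_eq_iff)
  ultimately have "sqi M (yy 0)" by simp
  moreover have "sqi M (xx 0)" unfolding xx_def by (simp add: sqi_const[OF fm])
  ultimately show ?case using z by simp
next
  case (Suc m)
  then have sx: "sqi M (xx m)" and sy: "sqi M (yy m)" and sz: "sqi M (zz m)" by auto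
  have sv: "sqi M (\<lambda>\<omega>. xx m \<omega> - \<gamma> *\<^sub>R yy m \<omega>)"
    by (intro sqi_add(2)[OF fm sx] sqi_scale[OF fm sy])
  have sx': "sqi M (xx (Suc m))"
    unfolding comps_Suc by (cases "Suc m mod \<beta> = 0") (simp_all add: sv sqi_mix[OF fm sv])
  have sz': "sqi M (zz (Suc m))"
    unfolding comps_Suc by (cases "Suc m mod \<beta> = 0") (simp_all add: sz sqi_mix[OF fm sv])
  have sw: "sqi M (\<lambda>\<omega>. yy m \<omega> + stoch_grad g \<xi> (Suc m) (zz (Suc m) \<omega>) \<omega> - stoch_grad g \<xi> m (zz m \<omega>) \<omega>)"
    by (intro sqi_add[OF fm] Gfin sz sz' sy)
  have ey: "yy (Suc m) = (\<lambda>\<omega>. if Suc m mod \<beta> = 0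
      then mix Wb (yy m \<omega> + stoch_grad g \<xi> (Suc m) (zz (Suc m) \<omega>) \<omega> - stoch_grad g \<xi> m (zz m \<omega>) \<omega>)
      else yy m \<omega> + stoch_grad g \<xi> (Suc m) (zz (Suc m) \<omega>) \<omega> - stoch_grad g \<xi> m (zz m \<omega>) \<omega>)"
    by (rule ext) (rule comps_Suc(3))
  have sy': "sqi M (yy (Suc m))"
    unfolding ey by (cases "Suc m mod \<beta> = 0") (simp_all add: sw sqi_mix[OF fm sw])
  show ?case using sx' sy' sz' by simp
qed

end

context fsetup begin

lemma g_comp_meas:
  assumes \<Phi>m: "\<Phi> \<in> borel_measurable (St t)" and s: "s < t"
  shows "(\<lambda>\<zeta>. g i (\<Phi> \<zeta>) (\<zeta> (s, i))) \<in> borel_measurable (St t)"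
proof -
  have "(\<lambda>\<zeta>. (\<Phi> \<zeta>, \<xi>P s i \<zeta>)) \<in> measurable (St t) (borel \<Otimes>\<^sub>M D i)"
    using \<Phi>m xiP_meas[OF s] by (intro measurable_Pair) auto
  from measurable_comp[OF this g_meas[of i]] show ?thesis by (simp add: comp_def \<xi>P_def)
qed

lemma grad_comp_meas:
  assumes \<Phi>m: "\<Phi> \<in> borel_measurable N"
  shows "(\<lambda>\<zeta>. grad i (\<Phi> \<zeta>)) \<in> borel_measurable N"
  using measurable_comp[OF \<Phi>m grad_meas[of i]] by (simp add: comp_def)

definition "ee t0 i l \<omega> = g i (xx t0 \<omega> $ i) (\<xi> (t0 + l) i \<omega>) - grad i (xx t0 \<omega> $ i)"
definition "QQ t0 i a m \<omega> = (\<Sum>l\<in>{1..m}. ee t0 i l \<omega>) + a *\<^sub>R ee t0 i 0 \<omega>"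

lemma QQ_bound:
  "(\<integral>\<^sup>+\<omega>. ennreal ((norm (QQ t0 i a m \<omega>))\<^sup>2) \<partial>M) \<le> ennreal (real m * \<sigma>\<^sup>2 + a\<^sup>2 * \<sigma>\<^sup>2)"
proof (induction m)
  case 0
  define \<Phi> where "\<Phi> \<zeta> = xP t0 \<zeta> $ i" for \<zeta>
  have \<Phi>m: "\<Phi> \<in> borel_measurable (St t0)"
    unfolding \<Phi>_def using xP_meas[of t0 t0] by (intro borel_measurable_vec_nth) auto
  have eq\<Phi>: "\<Phi> (Ut t0 \<omega>) = xx t0 \<omega> $ i" for \<omega>
    using rep[of t0 t0 \<omega>] by (simp add: \<Phi>_def)
  have "(\<integral>\<^sup>+\<omega>. ennreal ((norm (ee t0 i 0 \<omega>))\<^sup>2) \<partial>M)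
     = (\<integral>\<^sup>+\<omega>. ennreal ((norm (g i (\<Phi> (Ut t0 \<omega>)) (\<xi> t0 i \<omega>) - grad i (\<Phi> (Ut t0 \<omega>)) + (\<lambda>_. 0) (Ut t0 \<omega>)))\<^sup>2) \<partial>M)"
    by (simp add: ee_def eq\<Phi>)
  also have "\<dots> \<le> ennreal (\<sigma>\<^sup>2) + (\<integral>\<^sup>+\<omega>. ennreal ((norm ((\<lambda>_. 0::'a) (Ut t0 \<omega>)))\<^sup>2) \<partial>M)"
    by (rule KLi[OF \<Phi>m]) simp
  finally have b: "(\<integral>\<^sup>+\<omega>. ennreal ((norm (ee t0 i 0 \<omega>))\<^sup>2) \<partial>M) \<le> ennreal (\<sigma>\<^sup>2)" by simp
  have em: "(\<lambda>\<omega>. ee t0 i 0 \<omega>) \<in> borel_measurable M"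
  proof -
    have "(\<lambda>\<omega>. (xx t0 \<omega> $ i, \<xi> t0 i \<omega>)) \<in> measurable M (borel \<Otimes>\<^sub>M D i)"
      using flex_meas_M(1) xi_meas by (intro measurable_Pair borel_measurable_vec_nth) auto
    from measurable_comp[OF this g_meas[of i]]
    have "(\<lambda>\<omega>. g i (xx t0 \<omega> $ i) (\<xi> t0 i \<omega>)) \<in> borel_measurable M" by (simp add: comp_def)
    then show ?thesis unfolding ee_def
      by (intro borel_measurable_diff grad_comp_meas borel_measurable_vec_nth flex_meas_M) auto
  qed
  have "(\<integral>\<^sup>+\<omega>. ennreal ((norm (QQ t0 i a 0 \<omega>))\<^sup>2) \<partial>M) = (\<integral>\<^sup>+\<omega>. ennreal (a\<^sup>2) * ennreal ((norm (ee t0 i 0 \<omega>))\<^sup>2) \<partial>M)"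
    by (simp add: QQ_def power_mult_distrib ennreal_mult)
  also have "\<dots> = ennreal (a\<^sup>2) * (\<integral>\<^sup>+\<omega>. ennreal ((norm (ee t0 i 0 \<omega>))\<^sup>2) \<partial>M)"
    using em by (intro nn_integral_cmult) auto
  also have "\<dots> \<le> ennreal (a\<^sup>2) * ennreal (\<sigma>\<^sup>2)" by (intro mult_left_mono b) auto
  also have "\<dots> = ennreal (real 0 * \<sigma>\<^sup>2 + a\<^sup>2 * \<sigma>\<^sup>2)" by (simp add: ennreal_mult)
  finally show ?case .
next
  case (Suc m)
  define t where "t = t0 + Suc m"
  define \<Phi> where "\<Phi> \<zeta> = xP t0 \<zeta> $ i" for \<zeta>
  define \<Psi> where "\<Psi> \<zeta> = (\<Sum>l\<in>{1..m}. g i (\<Phi> \<zeta>) (\<zeta> (t0 + l, i)) - grad i (\<Phi> \<zeta>))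
      + a *\<^sub>R (g i (\<Phi> \<zeta>) (\<zeta> (t0, i)) - grad i (\<Phi> \<zeta>))" for \<zeta>
  have \<Phi>m: "\<Phi> \<in> borel_measurable (St t)"
    unfolding \<Phi>_def using xP_meas[of t0 t] by (intro borel_measurable_vec_nth) (auto simp: t_def)
  have \<Psi>m: "\<Psi> \<in> borel_measurable (St t)"
    unfolding \<Psi>_def
    by (intro borel_measurable_add borel_measurable_sum borel_measurable_scaleR borel_measurable_diff
        g_comp_meas[OF \<Phi>m] grad_comp_meas[OF \<Phi>m] borel_measurable_const) (auto simp: t_def)
  have eq\<Phi>: "\<Phi> (Ut t \<omega>) = xx t0 \<omega> $ i" for \<omega>
    using rep[of t0 t \<omega>] by (simp add: \<Phi>_def t_def)
  have eq\<Psi>: "\<Psi> (Ut t \<omega>) = QQ t0 i a m \<omega>" for \<omega>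
  proof -
    have u: "Ut (Suc (t0 + m)) \<omega> (s, i) = \<xi> s i \<omega>" if "s \<le> t0 + m" for s
      using xiP_U[of s "Suc (t0 + m)" i \<omega>] that by (simp add: \<xi>P_def)
    show ?thesis unfolding \<Psi>_def QQ_def ee_def eq\<Phi>
      by (intro arg_cong2[where f = "(+)"] arg_cong2[where f = "(*\<^sub>R)"] sum.cong refl)
         (auto simp: u t_def)
  qed
  have "(\<integral>\<^sup>+\<omega>. ennreal ((norm (QQ t0 i a (Suc m) \<omega>))\<^sup>2) \<partial>M)
     = (\<integral>\<^sup>+\<omega>. ennreal ((norm (g i (\<Phi> (Ut t \<omega>)) (\<xi> t i \<omega>) - grad i (\<Phi> (Ut t \<omega>)) + \<Psi> (Ut t \<omega>)))\<^sup>2) \<partial>M)"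
  proof -
    have "QQ t0 i a (Suc m) \<omega> = ee t0 i (Suc m) \<omega> + QQ t0 i a m \<omega>" for \<omega>
      by (simp add: QQ_def)
    then show ?thesis unfolding eq\<Phi> eq\<Psi> by (simp add: ee_def t_def)
  qed
  also have "\<dots> \<le> ennreal (\<sigma>\<^sup>2) + (\<integral>\<^sup>+\<omega>. ennreal ((norm (\<Psi> (Ut t \<omega>)))\<^sup>2) \<partial>M)"
    by (rule KLi[OF \<Phi>m \<Psi>m])
  also have "\<dots> \<le> ennreal (\<sigma>\<^sup>2) + ennreal (real m * \<sigma>\<^sup>2 + a\<^sup>2 * \<sigma>\<^sup>2)"
    using Suc.IH by (simp add: eq\<Psi> add_left_mono)
  also have "\<dots> = ennreal (real (Suc m) * \<sigma>\<^sup>2 + a\<^sup>2 * \<sigma>\<^sup>2)"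
    by (simp add: ennreal_plus[symmetric] algebra_simps del: ennreal_plus)
  finally show ?case .
qed

end

lemma sqi_int:
  fixes f :: "'w \<Rightarrow> 'a::euclidean_space^'n::finite"
  assumes s: "sqi N f"
  shows "integrable N (\<lambda>\<omega>. (norm (tilde (f \<omega>)))\<^sup>2)" "integrable N (\<lambda>\<omega>. (norm (f \<omega>))\<^sup>2)"
proof -
  have m: "f \<in> borel_measurable N" and fin: "(\<integral>\<^sup>+\<omega>. ennreal ((norm (f \<omega>))\<^sup>2) \<partial>N) < \<infinity>"
    using s by (auto simp: sqi_def)
  have tm: "(\<lambda>\<omega>. tilde (f \<omega>)) \<in> borel_measurable N"
    unfolding tilde_eq using m by (intro borel_measurable_diff mix_meas)
  show "integrable N (\<lambda>\<omega>. (norm (f \<omega>))\<^sup>2)"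
    using m fin by (intro integrableI_nonneg) auto
  have "(\<integral>\<^sup>+\<omega>. ennreal ((norm (tilde (f \<omega>)))\<^sup>2) \<partial>N) \<le> (\<integral>\<^sup>+\<omega>. ennreal ((norm (f \<omega>))\<^sup>2) \<partial>N)"
    by (intro nn_integral_mono ennreal_leI norm_tilde_sq)
  then show "integrable N (\<lambda>\<omega>. (norm (tilde (f \<omega>)))\<^sup>2)"
    using tm fin by (intro integrableI_nonneg) auto
qed

context fsetup begin

definition "Dv t0 \<omega> = (\<Sum>l<\<beta>. stoch_grad g \<xi> (t0 + l) (xx t0 \<omega>) \<omega> - stoch_grad g \<xi> t0 (xx t0 \<omega>) \<omega>)"

lemma Dv_comp:
  assumes b: "\<beta> \<ge> 1"
  shows "Dv t0 \<omega> $ i = QQ t0 i (1 - real \<beta>) (\<beta> - 1) \<omega>"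
proof -
  have e: "g i (xx t0 \<omega> $ i) (\<xi> (t0 + l) i \<omega>) - g i (xx t0 \<omega> $ i) (\<xi> t0 i \<omega>) = ee t0 i l \<omega> - ee t0 i 0 \<omega>" for l
    by (simp add: ee_def)
  have u: "{..<\<beta>} = insert 0 {1..\<beta> - 1}" using b by auto
  have "Dv t0 \<omega> $ i = (\<Sum>l<\<beta>. ee t0 i l \<omega> - ee t0 i 0 \<omega>)"
    by (simp add: Dv_def stoch_grad_def e)
  also have "\<dots> = (\<Sum>l\<in>{1..\<beta> - 1}. ee t0 i l \<omega> - ee t0 i 0 \<omega>)"
    unfolding u by (subst sum.insert) auto
  also have "\<dots> = (\<Sum>l\<in>{1..\<beta> - 1}. ee t0 i l \<omega>) - real (\<beta> - 1) *\<^sub>R ee t0 i 0 \<omega>"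
    by (simp add: sum_subtractf sum_constant_scaleR)
  also have "\<dots> = QQ t0 i (1 - real \<beta>) (\<beta> - 1) \<omega>"
    using b by (simp add: QQ_def of_nat_diff algebra_simps)
  finally show ?thesis .
qed

lemma Dv_meas: "Dv t0 \<in> borel_measurable M"
proof -
  have "(\<lambda>\<omega>. stoch_grad g \<xi> s (xx t0 \<omega>) \<omega>) \<in> borel_measurable M" for s
    by (rule stoch_grad_meas[OF flex_meas_M(1) xi_meas g_meas])
  then show ?thesis unfolding Dv_def[abs_def]
    by (intro borel_measurable_sum borel_measurable_diff) auto
qed

lemma Dv_bound:
  assumes b: "\<beta> \<ge> 1"
  shows "sqi M (Dv t0)" "(\<integral>\<omega>. (norm (Dv t0 \<omega>))\<^sup>2 \<partial>M) \<le> 2 * real CARD('n) * (real \<beta>)\<^sup>2 * \<sigma>\<^sup>2"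
proof -
  define c where "c = real (\<beta> - 1) * \<sigma>\<^sup>2 + (1 - real \<beta>)\<^sup>2 * \<sigma>\<^sup>2"
  have ci: "(\<integral>\<^sup>+\<omega>. ennreal ((norm (Dv t0 \<omega> $ i))\<^sup>2) \<partial>M) \<le> ennreal c" for i
    unfolding Dv_comp[OF b] c_def by (rule QQ_bound)
  show s: "sqi M (Dv t0)"
    by (rule sqi_vec[OF Dv_meas]) (use ci in \<open>auto intro: le_less_trans[OF _ ennreal_less_top]\<close>)
  have "(\<integral>\<^sup>+\<omega>. ennreal ((norm (Dv t0 \<omega>))\<^sup>2) \<partial>M) = (\<integral>\<^sup>+\<omega>. (\<Sum>i\<in>UNIV. ennreal ((norm (Dv t0 \<omega> $ i))\<^sup>2)) \<partial>M)"
    by (simp add: norm_vec_sq sum_ennreal)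
  also have "\<dots> = (\<Sum>i\<in>UNIV. (\<integral>\<^sup>+\<omega>. ennreal ((norm (Dv t0 \<omega> $ i))\<^sup>2) \<partial>M))"
    using Dv_meas by (intro nn_integral_sum) auto
  also have "\<dots> \<le> (\<Sum>i\<in>(UNIV::'n set). ennreal c)"
    by (intro sum_mono ci)
  also have "\<dots> = ennreal (real CARD('n) * c)"
    by (simp add: ennreal_of_nat_eq_real_of_nat ennreal_mult')
  finally have nb: "(\<integral>\<^sup>+\<omega>. ennreal ((norm (Dv t0 \<omega>))\<^sup>2) \<partial>M) \<le> ennreal (real CARD('n) * c)" .
  have c0: "0 \<le> c" by (simp add: c_def)
  have "(\<integral>\<omega>. (norm (Dv t0 \<omega>))\<^sup>2 \<partial>M) = enn2real (\<integral>\<^sup>+\<omega>. ennreal ((norm (Dv t0 \<omega>))\<^sup>2) \<partial>M)"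
    using Dv_meas by (intro integral_eq_nn_integral) auto
  also have "\<dots> \<le> real CARD('n) * c"
    using nb c0 by (intro enn2real_leI) auto
  also have "c \<le> 2 * (real \<beta>)\<^sup>2 * \<sigma>\<^sup>2"
  proof -
    have "real (\<beta> - 1) + (1 - real \<beta>)\<^sup>2 \<le> 2 * (real \<beta>)\<^sup>2"
      using b by (simp add: of_nat_diff power2_eq_square algebra_simps)
    then have "(real (\<beta> - 1) + (1 - real \<beta>)\<^sup>2) * \<sigma>\<^sup>2 \<le> 2 * (real \<beta>)\<^sup>2 * \<sigma>\<^sup>2"
      by (intro mult_right_mono) auto
    then show ?thesis by (simp add: c_def algebra_simps)
  qed
  then have "real CARD('n) * c \<le> real CARD('n) * (2 * (real \<beta>)\<^sup>2 * \<sigma>\<^sup>2)"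
    by (intro mult_left_mono) auto
  finally show "(\<integral>\<omega>. (norm (Dv t0 \<omega>))\<^sup>2 \<partial>M) \<le> 2 * real CARD('n) * (real \<beta>)\<^sup>2 * \<sigma>\<^sup>2"
    by (simp add: algebra_simps)
qed

end

context fsetup begin

theorem round_bound:
  assumes r: "rows1 Wb" and c: "cols1 Wb" and r1: "rho Wb < 1" and b: "\<beta> \<ge> 1"
  shows "(\<integral>\<omega>. (norm (tilde (xx (\<beta> * (k + 1)) \<omega>)))\<^sup>2 \<partial>M)
    \<le> (1 + rho Wb) / 2 * (\<integral>\<omega>. (norm (tilde (xx (\<beta> * k) \<omega>)))\<^sup>2 \<partial>M)
     + 4 * \<gamma>\<^sup>2 * (real \<beta>)\<^sup>2 * rho Wb / (1 - rho Wb) * (\<integral>\<omega>. (norm (tilde (yy (\<beta> * k) \<omega>)))\<^sup>2 \<partial>M)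
     + 8 * real CARD('n) * \<gamma>\<^sup>2 * (real \<beta>)\<^sup>2 * rho Wb / (1 - rho Wb) * \<sigma>\<^sup>2"
proof -
  define t0 where "t0 = \<beta> * k"
  define A where "A = (1 + rho Wb) / 2"
  define B where "B = 4 * \<gamma>\<^sup>2 * (real \<beta>)\<^sup>2 * rho Wb / (1 - rho Wb)"
  define C where "C = 4 * \<gamma>\<^sup>2 * rho Wb / (1 - rho Wb)"
  have r0: "0 \<le> rho Wb" by (simp add: rho_def)
  have C0: "0 \<le> C" using r0 r1 by (simp add: C_def)
  have S0: "flexgt Wb \<gamma> \<beta> g \<xi> x0 \<omega> (\<beta> * k) = (xx t0 \<omega>, yy t0 \<omega>, xx t0 \<omega>)" for \<omega>
  proof -
    have "snd (snd (flexgt Wb \<gamma> \<beta> g \<xi> x0 \<omega> (\<beta> * k))) = fst (flexgt Wb \<gamma> \<beta> g \<xi> x0 \<omega> (\<beta> * k))"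
      by (rule flexgt_z_eq_x) simp
    then show ?thesis by (simp add: xx_def yy_def t0_def prod_eq_iff)
  qed
  have xe: "xx (\<beta> * (k + 1)) \<omega> = mix Wb (xx t0 \<omega> - \<gamma> *\<^sub>R (real \<beta> *\<^sub>R yy t0 \<omega> + Dv t0 \<omega>))" for \<omega>
    using flexgt_round_end[OF b S0[of \<omega>]] by (simp add: xx_def Dv_def t0_def)
  have pw: "(norm (tilde (xx (\<beta> * (k + 1)) \<omega>)))\<^sup>2 \<le> A * (norm (tilde (xx t0 \<omega>)))\<^sup>2
      + B * (norm (tilde (yy t0 \<omega>)))\<^sup>2 + C * (norm (Dv t0 \<omega>))\<^sup>2" for \<omega>
    unfolding xe A_def B_def C_def by (rule pointwise_bound[OF r c r1])
  have iL: "integrable M (\<lambda>\<omega>. (norm (tilde (xx (\<beta> * (k + 1)) \<omega>)))\<^sup>2)"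
    using sq_all[of "\<beta> * (k + 1)"] by (intro sqi_int) auto
  have iX: "integrable M (\<lambda>\<omega>. (norm (tilde (xx t0 \<omega>)))\<^sup>2)"
    using sq_all[of t0] by (intro sqi_int) auto
  have iY: "integrable M (\<lambda>\<omega>. (norm (tilde (yy t0 \<omega>)))\<^sup>2)"
    using sq_all[of t0] by (intro sqi_int) auto
  have iD: "integrable M (\<lambda>\<omega>. (norm (Dv t0 \<omega>))\<^sup>2)"
    using Dv_bound(1)[OF b, of t0] by (rule sqi_int)
  have "(\<integral>\<omega>. (norm (tilde (xx (\<beta> * (k + 1)) \<omega>)))\<^sup>2 \<partial>M)
      \<le> (\<integral>\<omega>. A * (norm (tilde (xx t0 \<omega>)))\<^sup>2 + B * (norm (tilde (yy t0 \<omega>)))\<^sup>2 + C * (norm (Dv t0 \<omega>))\<^sup>2 \<partial>M)"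
    using iL iX iY iD pw by (intro integral_mono) auto
  also have "\<dots> = A * (\<integral>\<omega>. (norm (tilde (xx t0 \<omega>)))\<^sup>2 \<partial>M) + B * (\<integral>\<omega>. (norm (tilde (yy t0 \<omega>)))\<^sup>2 \<partial>M)
      + C * (\<integral>\<omega>. (norm (Dv t0 \<omega>))\<^sup>2 \<partial>M)"
    using iX iY iD by simp
  also have "C * (\<integral>\<omega>. (norm (Dv t0 \<omega>))\<^sup>2 \<partial>M) \<le> C * (2 * real CARD('n) * (real \<beta>)\<^sup>2 * \<sigma>\<^sup>2)"
    using Dv_bound(2)[OF b, of t0] C0 by (intro mult_left_mono) auto
  also have "C * (2 * real CARD('n) * (real \<beta>)\<^sup>2 * \<sigma>\<^sup>2) = 8 * real CARD('n) * \<gamma>\<^sup>2 * (real \<beta>)\<^sup>2 * rho Wb / (1 - rho Wb) * \<sigma>\<^sup>2"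
    by (simp add: C_def)
  finally show ?thesis by (simp add: A_def B_def t0_def)
qed

end


theorem lemma5:
  fixes M :: "'w measure"
    and D :: "'n::finite \<Rightarrow> 's measure"
    and \<xi> :: "nat \<Rightarrow> 'n \<Rightarrow> 'w \<Rightarrow> 's"
    and F :: "'n \<Rightarrow> 'a::euclidean_space \<Rightarrow> 's \<Rightarrow> real"
    and f :: "'n \<Rightarrow> 'a \<Rightarrow> real"
    and g :: "'n \<Rightarrow> 'a \<Rightarrow> 's \<Rightarrow> 'a"
    and grad :: "'n \<Rightarrow> 'a \<Rightarrow> 'a"
    and W Wb :: "real ^ 'n ^ 'n"
    and x0 :: "'a ^ 'n"
    and L \<sigma> \<gamma> :: real
    and \<alpha> \<beta> k :: nat
  assumes M: "prob_space M"
    and D: "\<And>i. prob_space (D i)"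
    and xi_meas: "\<And>t i. \<xi> t i \<in> measurable M (D i)"
    and xi_distr: "\<And>t i. distr M (D i) (\<xi> t i) = D i"
    and xi_indep: "prob_space.indep_vars M (\<lambda>(t, i). D i) (\<lambda>(t, i). \<xi> t i) UNIV"
    and F_int: "\<And>i x. integrable (D i) (F i x)"
    and f_def: "\<And>i x. f i x = (\<integral>s. F i x s \<partial>D i)"
    and F_grad: "\<And>i x s. GDERIV (\<lambda>x. F i x s) x :> g i x s"
    and g_meas: "\<And>i. (\<lambda>(x, s). g i x s) \<in> borel_measurable (borel \<Otimes>\<^sub>M D i)"
    and f_grad: "\<And>i x. GDERIV (f i) x :> grad i x"
    and unbiased: "\<And>i x. integrable (D i) (g i x) \<and> (\<integral>s. g i x s \<partial>D i) = grad i x"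
    and smooth: "\<And>i x y. norm (grad i x - grad i y) \<le> L * norm (x - y)"
    and var_int: "\<And>i x. integrable (D i) (\<lambda>s. (norm (g i x s - grad i x))\<^sup>2)"
    and var: "\<And>i x. (\<integral>s. (norm (g i x s - grad i x))\<^sup>2 \<partial>D i) \<le> \<sigma>\<^sup>2"
    and W_ds: "doubly_stochastic W"
    and rhoW: "rho W < 1"
    and alpha: "\<alpha> \<ge> 1" and beta: "\<beta> \<ge> 1"
    and Wb: "Wb = mat_pow W \<alpha> \<or> Wb = acc_mat W (acc_eta W) \<alpha>"
    and rhoWb: "rho Wb < 1"
    and L_pos: "L > 0"
    and gamma_pos: "\<gamma> > 0"
    and gamma_le: "\<gamma> \<le> 1 / (4 * real \<beta> * L)"
  shows "(\<integral>\<omega>. (norm (tilde (xs Wb \<gamma> \<beta> g \<xi> x0 (\<beta> * (k + 1)) \<omega>)))\<^sup>2 \<partial>M)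
    \<le> (1 + rho Wb) / 2 * (\<integral>\<omega>. (norm (tilde (xs Wb \<gamma> \<beta> g \<xi> x0 (\<beta> * k) \<omega>)))\<^sup>2 \<partial>M)
     + 4 * \<gamma>\<^sup>2 * (real \<beta>)\<^sup>2 * rho Wb / (1 - rho Wb)
         * (\<integral>\<omega>. (norm (tilde (ys Wb \<gamma> \<beta> g \<xi> x0 (\<beta> * k) \<omega>)))\<^sup>2 \<partial>M)
     + 8 * real CARD('n) * \<gamma>\<^sup>2 * (real \<beta>)\<^sup>2 * rho Wb / (1 - rho Wb) * \<sigma>\<^sup>2"
proof -
  interpret fsetup M D \<xi> g grad Wb x0 L \<sigma> \<gamma> \<beta>
    by (rule fsetup.intro; fact)
  have ds: "rows1 W \<and> cols1 W" by (rule ds_rows_cols[OF W_ds])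
  have rc: "rows1 Wb \<and> cols1 Wb"
    using Wb
  proof
    assume "Wb = mat_pow W \<alpha>"
    then show ?thesis using pow_rows_cols[of W \<alpha>] ds by simp
  next
    assume "Wb = acc_mat W (acc_eta W) \<alpha>"
    then show ?thesis using acc_rows_cols[of W "acc_eta W" \<alpha>] ds by simp
  qed
  have "(\<integral>\<omega>. (norm (tilde (xx (\<beta> * (k + 1)) \<omega>)))\<^sup>2 \<partial>M)
    \<le> (1 + rho Wb) / 2 * (\<integral>\<omega>. (norm (tilde (xx (\<beta> * k) \<omega>)))\<^sup>2 \<partial>M)
     + 4 * \<gamma>\<^sup>2 * (real \<beta>)\<^sup>2 * rho Wb / (1 - rho Wb) * (\<integral>\<omega>. (norm (tilde (yy (\<beta> * k) \<omega>)))\<^sup>2 \<partial>M)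
     + 8 * real CARD('n) * \<gamma>\<^sup>2 * (real \<beta>)\<^sup>2 * rho Wb / (1 - rho Wb) * \<sigma>\<^sup>2"
    using rc rhoWb beta by (intro round_bound) auto
  moreover have "\<And>t \<omega>. xs Wb \<gamma> \<beta> g \<xi> x0 t \<omega> = xx t \<omega>" "\<And>t \<omega>. ys Wb \<gamma> \<beta> g \<xi> x0 t \<omega> = yy t \<omega>"
    by (simp_all add: xs_def ys_def xx_def yy_def)
  ultimately show ?thesis by simp
qed

end
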